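(* Let $K\subseteq\mathcal I_{int}$ be finite and let $A$ be an NFA over the alphabet $2^{\Sigma\cup K\cup\{\mathsf{anch}\}}$ whose language $L(A)$ consists of $K$-interval words over $\Sigma$. Then one can construct a $\mathsf{PnEMTL}$ formula $\phi$ over $\Sigma$ such that for every timed word $\rho$ over $\Sigma$ and every $i\in dom(\rho)$: $\rho,i\models\phi$ if and only if $(\rho,i)\in\mathsf{Time}(L(A))$.
   Context: Fix a finite set $\Sigma$ of propositions. A timed word over $\Sigma$ is a finite sequence $\rho=(\sigma_1,\tau_1)\cdots(\sigma_n,\tau_n)$ with $\emptyset\neq\sigma_i\subseteq\Sigma$, $\tau_i\in\mathbb R_{\ge0}$, $\tau_1=0$, $\tau_i\le\tau_j$ for $i\le j$; $dom(\rho)=\{1,\dots,n\}$; a pointed timed word is a pair $(\rho,i)$ with $i\in dom(\rho)$. $\mathcal I_{int}$ is the set of open, half-open or closed real intervals with endpoints in $\mathbb Z\cup\{-\infty,\infty\}$. Interval words: let $K\subseteq\mathcal I_{int}$ be finite and $\mathsf{anch}$ a fresh symbol. A $K$-interval word over $\Sigma$ is a finite word $\kappa=a_1\cdots a_n$ with $a_j\subseteq\Sigma\cup K\cup\{\mathsf{anch}\}$ such that exactly one position $i$, denoted $\mathsf{anch}(\kappa)$, has $\mathsf{anch}\in a_i$, and $a_i\subseteq\Sigma\cup\{\mathsf{anch}\}$ there. A pointed timed word $(\rho,i)$ with $\rho=(\sigma_1,\tau_1)\cdots(\sigma_m,\tau_m)$ is consistent with $\kappa$ iff $m=n$, $i=\mathsf{anch}(\kappa)$,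 $\sigma_j=a_j\cap\Sigma$ for all $j$, and $\tau_j-\tau_i\in I$ for all $j\neq i$ and all $I\in a_j\cap K$. $\mathsf{Time}(\kappa)$ is the set of pointed timed words consistent with $\kappa$, and $\mathsf{Time}(\Omega)=\bigcup_{\kappa\in\Omega}\mathsf{Time}(\kappa)$. $\mathsf{PnEMTL}$: formulae $\varphi::=a\mid\varphi\wedge\varphi\mid\neg\varphi\mid\mathcal F^k_{I_1,\dots,I_k}(\mathsf A_1,\dots,\mathsf A_{k+1})(S)\mid\mathcal P^k_{I_1,\dots,I_k}(\mathsf A_1,\dots,\mathsf A_{k+1})(S)$, where $a\in\Sigma$, $k\ge1$, $I_1,\dots,I_k\in\mathcal I_{int}$, $S$ is a finite set of $\mathsf{PnEMTL}$ formulae and $\mathsf A_1,\dots,\mathsf A_{k+1}$ are finite automata over the alphabet $2^S$. For a timed word $\rho$ of length $n$ and position $j$ let $S_j=\{\theta\in S:\rho,j\models\theta\}$; for $x\le y$, $\mathsf{Seg}^+(\rho,x,y,S)=S_xS_{x+1}\cdots S_y$ and $\mathsf{Seg}^-(\rho,y,x,S)=S_yS_{y-1}\cdots S_x$. Then $\rho,i_0\models\mathcal F^k_{I_1,\dots,I_k}(\mathsf A_1,\dots,\mathsf A_{k+1})(S)$ iff there are $i_0\le i_1\le\dots\le i_k\le n$ with $\tau_{i_w}-\tau_{i_0}\in I_w$ and $\mathsf{Seg}^+(\rho,i_{w-1},i_w,S)\in L(\mathsf A_w)$ for all $1\le w\le k$, and $\mathsf{Seg}^+(\rho,i_k,n,S)\in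 L(\mathsf A_{k+1})$; $\rho,i_0\models\mathcal P^k_{I_1,\dots,I_k}(\mathsf A_1,\dots,\mathsf A_{k+1})(S)$ iff there are $i_0\ge i_1\ge\dots\ge i_k\ge1$ with $\tau_{i_0}-\tau_{i_w}\in I_w$ and $\mathsf{Seg}^-(\rho,i_{w-1},i_w,S)\in L(\mathsf A_w)$ for all $1\le w\le k$, and $\mathsf{Seg}^-(\rho,i_k,1,S)\in L(\mathsf A_{k+1})$. Propositions and Booleans are as usual. *)

theory Defs
  imports Complex_Main
begin

datatype ibound = Unb | Closed int | Open int

datatype intv = Intv ibound ibound  (* lower bound, upper bound; Unb = -\<infinity> resp. +\<infinity> *)

fun lower_ok :: "ibound \<Rightarrow> real \<Rightarrow> bool" where
  "lower_ok Unb x = True"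
| "lower_ok (Closed a) x = (real_of_int a \<le> x)"
| "lower_ok (Open a) x = (real_of_int a < x)"

fun upper_ok :: "ibound \<Rightarrow> real \<Rightarrow> bool" where
  "upper_ok Unb x = True"
| "upper_ok (Closed b) x = (x \<le> real_of_int b)"
| "upper_ok (Open b) x = (x < real_of_int b)"

fun in_intv :: "real \<Rightarrow> intv \<Rightarrow> bool" where
  "in_intv x (Intv l u) = (lower_ok l x \<and> upper_ok u x)"

section \<open>Timed words (positions are 1-based, as in the paper)\<close>

type_synonym 'a tword = "('a set \<times> real) list"

definition sig :: "'a tword \<Rightarrow> nat \<Rightarrow> 'a set" where
  "sig \<rho> j = fst (\<rho> ! (j - 1))"

definition tau :: "'a tword \<Rightarrow> nat \<Rightarrow> real" where
  "tau \<rho> j = snd (\<rho> ! (j - 1))"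

definition dom_tw :: "'a tword \<Rightarrow> nat set" where
  "dom_tw \<rho> = {1..length \<rho>}"

definition timed_word :: "'a set \<Rightarrow> 'a tword \<Rightarrow> bool" where
  "timed_word Sig \<rho> \<longleftrightarrow> \<rho> \<noteq> [] \<and>
     (\<forall>j\<in>dom_tw \<rho>. sig \<rho> j \<noteq> {} \<and> sig \<rho> j \<subseteq> Sig) \<and>
     tau \<rho> 1 = 0 \<and>
     (\<forall>i\<in>dom_tw \<rho>. \<forall>j\<in>dom_tw \<rho>. i \<le> j \<longrightarrow> tau \<rho> i \<le> tau \<rho> j)"

record ('q, 'b) nfa =
  init :: "'q set"
  final :: "'q set"
  trans :: "('q \<times> 'b \<times> 'q) set"

definition nfa_wf :: "'b set \<Rightarrow> ('q, 'b) nfa \<Rightarrow> bool" where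
  "nfa_wf Alph A \<longleftrightarrow> finite (init A) \<and> finite (final A) \<and> finite (trans A) \<and>
     (\<forall>(p, b, q)\<in>trans A. b \<in> Alph)"

inductive path :: "('q, 'b) nfa \<Rightarrow> 'q \<Rightarrow> 'b list \<Rightarrow> 'q \<Rightarrow> bool" for A where
  path_nil: "path A p [] p"
| path_cons: "(p, b, q) \<in> trans A \<Longrightarrow> path A q w r \<Longrightarrow> path A p (b # w) r"

definition lang :: "('q, 'b) nfa \<Rightarrow> 'b list set" where
  "lang A = {w. \<exists>p\<in>init A. \<exists>q\<in>final A. path A p w q}"

datatype 'a isym = IProp 'a | IItv intv | Anch

definition is_anchor :: "'a isym set list \<Rightarrow> nat \<Rightarrow> bool" where
  "is_anchor \<kappa> i \<longleftrightarrow> i \<in> {1..length \<kappa>} \<and> Anch \<in> \<kappa> ! (i - 1)"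

definition interval_word :: "'a set \<Rightarrow> intv set \<Rightarrow> 'a isym set list \<Rightarrow> bool" where
  "interval_word Sig K \<kappa> \<longleftrightarrow>
     (\<forall>a\<in>set \<kappa>. a \<subseteq> IProp ` Sig \<union> IItv ` K \<union> {Anch}) \<and>
     (\<exists>!i. is_anchor \<kappa> i) \<and>
     (\<forall>i. is_anchor \<kappa> i \<longrightarrow> \<kappa> ! (i - 1) \<subseteq> IProp ` Sig \<union> {Anch})"

definition anch_pos :: "'a isym set list \<Rightarrow> nat" where
  "anch_pos \<kappa> = (THE i. is_anchor \<kappa> i)"

definition consistent :: "intv set \<Rightarrow> 'a tword \<Rightarrow> nat \<Rightarrow> 'a isym set list \<Rightarrow> bool" where
  "consistent K \<rho> i \<kappa> \<longleftrightarrow> length \<rho> = length \<kappa> \<and> i = anch_pos \<kappa> \<and>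
     (\<forall>j\<in>dom_tw \<rho>. sig \<rho> j = {a. IProp a \<in> \<kappa> ! (j - 1)}) \<and>
     (\<forall>j\<in>dom_tw \<rho>. j \<noteq> i \<longrightarrow>
        (\<forall>I\<in>K. IItv I \<in> \<kappa> ! (j - 1) \<longrightarrow> in_intv (tau \<rho> j - tau \<rho> i) I))"

definition Time :: "intv set \<Rightarrow> 'a isym set list set \<Rightarrow> ('a tword \<times> nat) set" where
  "Time K \<Omega> = {(\<rho>, i). \<exists>\<kappa>\<in>\<Omega>. consistent K \<rho> i \<kappa>}"

(* The finite set S of subformulas is given as a list; the automata read letters
   that are subsets of {0..<length S}, a letter X standing for {S!m | m \<in> X} \<subseteq> S. *)
datatype 'a fm =
    FProp 'a
  | FAnd "'a fm" "'a fm"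
  | FNeg "'a fm"
  | FFut "intv list" "(nat, nat set) nfa list" "'a fm list"
  | FPast "intv list" "(nat, nat set) nfa list" "'a fm list"

definition segp :: "(nat \<Rightarrow> 'b) \<Rightarrow> nat \<Rightarrow> nat \<Rightarrow> 'b list" where
  "segp L x y = map L [x..<Suc y]"

definition segm :: "(nat \<Rightarrow> 'b) \<Rightarrow> nat \<Rightarrow> nat \<Rightarrow> 'b list" where
  "segm L y x = map L (rev [x..<Suc y])"

definition fut_sem :: "intv list \<Rightarrow> (nat, nat set) nfa list \<Rightarrow> (nat \<Rightarrow> nat set)
    \<Rightarrow> 'a tword \<Rightarrow> nat \<Rightarrow> bool" where
  "fut_sem Is As L \<rho> i0 \<longleftrightarrow> (let k = length Is; n = length \<rho> in
     \<exists>ix :: nat \<Rightarrow> nat. ix 0 = i0 \<and> (\<forall>w<k. ix w \<le> ix (Suc w)) \<and> ix k \<le> n \<and>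
       (\<forall>w\<in>{1..k}. in_intv (tau \<rho> (ix w) - tau \<rho> i0) (Is ! (w - 1)) \<and>
                    segp L (ix (w - 1)) (ix w) \<in> lang (As ! (w - 1))) \<and>
       segp L (ix k) n \<in> lang (As ! k))"

definition past_sem :: "intv list \<Rightarrow> (nat, nat set) nfa list \<Rightarrow> (nat \<Rightarrow> nat set)
    \<Rightarrow> 'a tword \<Rightarrow> nat \<Rightarrow> bool" where
  "past_sem Is As L \<rho> i0 \<longleftrightarrow> (let k = length Is in
     \<exists>ix :: nat \<Rightarrow> nat. ix 0 = i0 \<and> (\<forall>w<k. ix (Suc w) \<le> ix w) \<and> 1 \<le> ix k \<and>
       (\<forall>w\<in>{1..k}. in_intv (tau \<rho> i0 - tau \<rho> (ix w)) (Is ! (w - 1)) \<and>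
                    segm L (ix (w - 1)) (ix w) \<in> lang (As ! (w - 1))) \<and>
       segm L (ix k) 1 \<in> lang (As ! k))"

primrec sat :: "'a fm \<Rightarrow> 'a tword \<Rightarrow> nat \<Rightarrow> bool" where
  "sat (FProp a) \<rho> i = (a \<in> sig \<rho> i)"
| "sat (FAnd \<phi> \<psi>) \<rho> i = (sat \<phi> \<rho> i \<and> sat \<psi> \<rho> i)"
| "sat (FNeg \<phi>) \<rho> i = (\<not> sat \<phi> \<rho> i)"
| "sat (FFut Is As S) \<rho> i = (let vs = map sat S in
     fut_sem Is As (\<lambda>j. {m. m < length S \<and> (vs ! m) \<rho> j}) \<rho> i)"
| "sat (FPast Is As S) \<rho> i = (let vs = map sat S in
     past_sem Is As (\<lambda>j. {m. m < length S \<and> (vs ! m) \<rho> j}) \<rho> i)"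

primrec wf_fm :: "'a set \<Rightarrow> 'a fm \<Rightarrow> bool" where
  "wf_fm Sig (FProp a) = (a \<in> Sig)"
| "wf_fm Sig (FAnd \<phi> \<psi>) = (wf_fm Sig \<phi> \<and> wf_fm Sig \<psi>)"
| "wf_fm Sig (FNeg \<phi>) = wf_fm Sig \<phi>"
| "wf_fm Sig (FFut Is As S) = (1 \<le> length Is \<and> length As = Suc (length Is) \<and>
     (\<forall>A\<in>set As. nfa_wf (Pow {..<length S}) A) \<and> list_all id (map (wf_fm Sig) S))"
| "wf_fm Sig (FPast Is As S) = (1 \<le> length Is \<and> length As = Suc (length Is) \<and>
     (\<forall>A\<in>set As. nfa_wf (Pow {..<length S}) A) \<and> list_all id (map (wf_fm Sig) S))"

end

theory Submission
  imports Defs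
begin


lemma in_intv_convex:
  assumes "in_intv x I" "in_intv z I" "x \<le> y" "y \<le> z" shows "in_intv y I"
proof -
  obtain l u where I: "I = Intv l u" by (cases I)
  show ?thesis using assms unfolding I by (cases l; cases u; auto)
qed

fun negb :: "ibound \<Rightarrow> ibound" where
  "negb Unb = Unb" | "negb (Closed a) = Closed (- a)" | "negb (Open a) = Open (- a)"

fun negI :: "intv \<Rightarrow> intv" where
  "negI (Intv l u) = Intv (negb u) (negb l)"

lemma in_intv_negI: "in_intv (- x) (negI I) \<longleftrightarrow> in_intv x I"
proof -
  obtain l u where I: "I = Intv l u" by (cases I)
  show ?thesis unfolding I by (cases l; cases u; auto)
qed

abbreviation univI :: intv where "univI \<equiv> Intv Unb Unb"

inductive_simps path_Nil_iff[simp]: "path M p [] q"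
inductive_simps path_Cons_iff[simp]: "path M p (b # w) q"

lemma path_append: "path M p (u @ v) r \<longleftrightarrow> (\<exists>q. path M p u q \<and> path M q v r)"
  by (induction u arbitrary: p) auto

definition revA :: "('q, 'b) nfa \<Rightarrow> ('q, 'b) nfa" where
  "revA M = \<lparr>init = final M, final = init M, trans = (\<lambda>(p, b, q). (q, b, p)) ` trans M\<rparr>"

lemma trans_revA: "(q, b, p) \<in> trans (revA M) \<longleftrightarrow> (p, b, q) \<in> trans M"
  unfolding revA_def by force

lemma path_revA: "path (revA M) q (rev w) p \<longleftrightarrow> path M p w q"
  by (induction w arbitrary: p q) (auto simp: path_append trans_revA)

lemma path_target: "path M x bs y \<Longrightarrow> y = x \<or> (\<exists>p b. (p, b, y) \<in> trans M)"
  by (induction rule: path.induct) auto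

lemma path_letters: "path M x bs y \<Longrightarrow> \<forall>b\<in>set bs. \<exists>p q. (p, b, q) \<in> trans M"
  by (induction rule: path.induct) auto

definition GP :: "(nat \<Rightarrow> 'b \<Rightarrow> bool) \<Rightarrow> ('q, 'b) nfa \<Rightarrow> 'q \<Rightarrow> nat \<Rightarrow> nat \<Rightarrow> 'q \<Rightarrow> bool" where
  "GP G M s p q s' \<longleftrightarrow> (\<exists>bs. list_all2 G [Suc p..<Suc q] bs \<and> path M s bs s')"

lemma GP_refl: "GP G M s p p s' \<longleftrightarrow> s = s'"
  unfolding GP_def by auto

lemma upt_split3: assumes "a \<le> b" "b \<le> c" shows "[a..<c] = [a..<b] @ [b..<c]"
proof -
  have "[a..<b + (c - b)] = [a..<b] @ [b..<b + (c - b)]" using assms(1) by (rule upt_add_eq_append)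
  thus ?thesis using assms by simp
qed

lemma GP_split: assumes "p \<le> q" "q \<le> r"
  shows "GP G M s p r s'' \<longleftrightarrow> (\<exists>s'. GP G M s p q s' \<and> GP G M s' q r s'')"
proof
  have e: "[Suc p..<Suc r] = [Suc p..<Suc q] @ [Suc q..<Suc r]" using assms by (intro upt_split3) auto
  {
    assume "GP G M s p r s''"
    then obtain bs where bs: "list_all2 G [Suc p..<Suc r] bs" "path M s bs s''" unfolding GP_def by blast
    then obtain us vs where uv: "bs = us @ vs" "list_all2 G [Suc p..<Suc q] us" "list_all2 G [Suc q..<Suc r] vs"
      unfolding e list_all2_append1 by blast
    then obtain s' where "path M s us s'" "path M s' vs s''" using bs(2) path_append by metis
    thus "\<exists>s'. GP G M s p q s' \<and> GP G M s' q r s''" using uv unfolding GP_def by blast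
  }
  {
    assume "\<exists>s'. GP G M s p q s' \<and> GP G M s' q r s''"
    then obtain s' us vs where uv: "list_all2 G [Suc p..<Suc q] us" "path M s us s'"
       "list_all2 G [Suc q..<Suc r] vs" "path M s' vs s''" unfolding GP_def by blast
    have "list_all2 G [Suc p..<Suc r] (us @ vs)" unfolding e using uv by (intro list_all2_appendI)
    moreover have "path M s (us @ vs) s''" using uv path_append by metis
    ultimately show "GP G M s p r s''" unfolding GP_def by blast
  }
qed

lemma GP_step: "GP G M s p (Suc p) s' \<longleftrightarrow> (\<exists>b. G (Suc p) b \<and> (s, b, s') \<in> trans M)"
  unfolding GP_def by (auto simp: list_all2_Cons1)

lemma GP_mono:
  assumes "GP G M s p q s'" "\<And>j b. p < j \<Longrightarrow> j \<le> q \<Longrightarrow> G j b \<Longrightarrow> G' j b"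
  shows "GP G' M s p q s'"
proof -
  obtain bs where bs: "list_all2 G [Suc p..<Suc q] bs" "path M s bs s'" using assms(1) unfolding GP_def by blast
  have "list_all2 G' [Suc p..<Suc q] bs"
    using bs(1) assms(2) by (auto simp: list_all2_conv_all_nth simp del: upt_Suc)
  thus ?thesis using bs(2) unfolding GP_def by blast
qed

lemma GP_letters:
  assumes "GP G M s p q s'"
  shows "GP (\<lambda>j b. G j b \<and> (\<exists>x y. (x, b, y) \<in> trans M)) M s p q s'"
proof -
  obtain bs where bs: "list_all2 G [Suc p..<Suc q] bs" "path M s bs s'" using assms(1) unfolding GP_def by blast
  have "list_all2 (\<lambda>j b. G j b \<and> (\<exists>x y. (x, b, y) \<in> trans M)) [Suc p..<Suc q] bs"
    using bs(1) path_letters[OF bs(2)] by (auto simp: list_all2_conv_all_nth simp del: upt_Suc)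
  thus ?thesis using bs(2) unfolding GP_def by blast
qed



definition ostep :: "nat set set \<Rightarrow> (nat set \<Rightarrow> bool) \<Rightarrow> (nat, nat set) nfa" where
  "ostep Al P = \<lparr>init = {0}, final = {1}, trans = {(0, c, 1) | c. c \<in> Al \<and> P c}\<rparr>"

definition tstep :: "nat set set \<Rightarrow> (nat set \<Rightarrow> bool) \<Rightarrow> (nat, nat set) nfa" where
  "tstep Al P = \<lparr>init = {0}, final = {2},
     trans = {(0, c, 1) | c. c \<in> Al} \<union> {(1, c, 2) | c. c \<in> Al \<and> P c}\<rparr>"

lemma ostep_simps[simp]: "init (ostep Al P) = {0}" "final (ostep Al P) = {1}"
  "(x, c, y) \<in> trans (ostep Al P) \<longleftrightarrow> x = 0 \<and> y = 1 \<and> c \<in> Al \<and> P c"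
  by (auto simp: ostep_def)

lemma tstep_simps[simp]: "init (tstep Al P) = {0}" "final (tstep Al P) = {2}"
  "(x, c, y) \<in> trans (tstep Al P) \<longleftrightarrow> (x = 0 \<and> y = 1 \<and> c \<in> Al) \<or> (x = 1 \<and> y = 2 \<and> c \<in> Al \<and> P c)"
  by (auto simp: tstep_def)

lemma path_ostep1: "path (ostep Al P) (Suc 0) w q \<longleftrightarrow> w = [] \<and> q = Suc 0"
  by (cases w) auto

lemma lang_ostep: "lang (ostep Al P) = {[c] | c. c \<in> Al \<and> P c}"
proof -
  have "path (ostep Al P) 0 w 1 \<longleftrightarrow> (\<exists>c. w = [c] \<and> c \<in> Al \<and> P c)" for w
    by (cases w) (auto simp: path_ostep1)
  thus ?thesis unfolding lang_def by auto
qed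

lemma path_tstep2: "path (tstep Al P) 2 w q \<longleftrightarrow> w = [] \<and> q = 2"
  by (cases w) auto

lemma path_tstep1: "path (tstep Al P) (Suc 0) w 2 \<longleftrightarrow> (\<exists>c. w = [c] \<and> c \<in> Al \<and> P c)"
  by (cases w) (auto simp: path_tstep2)

lemma lang_tstep: "lang (tstep Al P) = {[c, c'] | c c'. c \<in> Al \<and> c' \<in> Al \<and> P c'}"
proof -
  have "path (tstep Al P) 0 w 2 \<longleftrightarrow> (\<exists>c c'. w = [c, c'] \<and> c \<in> Al \<and> c' \<in> Al \<and> P c')" for w
    by (cases w) (auto simp: path_tstep1)
  thus ?thesis unfolding lang_def by auto
qed

lemma wf_ostep: "finite Al \<Longrightarrow> nfa_wf Al (ostep Al P)"
proof -
  assume f: "finite Al"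
  have "{(0::nat, c, 1::nat) | c. c \<in> Al \<and> P c} \<subseteq> (\<lambda>c. (0, c, 1)) ` Al" by auto
  hence "finite {(0::nat, c, 1::nat) | c. c \<in> Al \<and> P c}" using f finite_subset by blast
  thus ?thesis unfolding nfa_wf_def ostep_def by auto
qed

lemma wf_tstep: "finite Al \<Longrightarrow> nfa_wf Al (tstep Al P)"
proof -
  assume f: "finite Al"
  have "{(0::nat, c, 1::nat) | c. c \<in> Al} \<subseteq> (\<lambda>c. (0, c, 1)) ` Al" by auto
  hence 1: "finite {(0::nat, c, 1::nat) | c. c \<in> Al}" using f finite_subset by blast
  have "{(1::nat, c, 2::nat) | c. c \<in> Al \<and> P c} \<subseteq> (\<lambda>c. (1, c, 2)) ` Al" by auto
  hence "finite {(1::nat, c, 2::nat) | c. c \<in> Al \<and> P c}" using f finite_subset by blast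
  thus ?thesis using 1 unfolding nfa_wf_def tstep_def by auto
qed

definition bodyA :: "nat set set \<Rightarrow> ('q, 'b) nfa \<Rightarrow> (nat set \<Rightarrow> 'b \<Rightarrow> bool) \<Rightarrow> 'q \<Rightarrow> 'q
    \<Rightarrow> ('q option, nat set) nfa" where
  "bodyA Al M R r s = \<lparr>init = {None}, final = {Some s},
     trans = {(None, c, Some r) | c. c \<in> Al} \<union>
             {(Some p, c, Some q) | p c q. c \<in> Al \<and> (\<exists>b. (p, b, q) \<in> trans M \<and> R c b)}\<rparr>"

lemma bodyA_simps[simp]: "init (bodyA Al M R r s) = {None}" "final (bodyA Al M R r s) = {Some s}"
  "(x, c, y) \<in> trans (bodyA Al M R r s) \<longleftrightarrow> (x = None \<and> y = Some r \<and> c \<in> Al) \<or>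
     (\<exists>p q. x = Some p \<and> y = Some q \<and> c \<in> Al \<and> (\<exists>b. (p, b, q) \<in> trans M \<and> R c b))"
  by (auto simp: bodyA_def)

lemma path_bodyA_Some:
  "path (bodyA Al M R r s) (Some p) w x \<longleftrightarrow>
     (\<exists>q. x = Some q \<and> w \<in> lists Al \<and> (\<exists>bs. list_all2 R w bs \<and> path M p bs q))"
proof (induction w arbitrary: p)
  case Nil
  then show ?case by auto
next
  case (Cons c w)
  show ?case
  proof
    assume "path (bodyA Al M R r s) (Some p) (c # w) x"
    then obtain y where y: "(Some p, c, y) \<in> trans (bodyA Al M R r s)" "path (bodyA Al M R r s) y w x" by auto
    then obtain q b where q: "y = Some q" "c \<in> Al" "(p, b, q) \<in> trans M" "R c b" by auto
    obtain q' bs where "x = Some q'" "w \<in> lists Al" "list_all2 R w bs" "path M q bs q'"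
      using Cons.IH y(2) q(1) by blast
    thus "\<exists>q. x = Some q \<and> c # w \<in> lists Al \<and> (\<exists>bs. list_all2 R (c # w) bs \<and> path M p bs q)"
      using q by (intro exI[of _ q'] conjI exI[of _ "b # bs"]) auto
  next
    assume "\<exists>q. x = Some q \<and> c # w \<in> lists Al \<and> (\<exists>bs. list_all2 R (c # w) bs \<and> path M p bs q)"
    then obtain q bs0 where h0: "x = Some q" "c # w \<in> lists Al" "list_all2 R (c # w) bs0"
      "path M p bs0 q" by blast
    then obtain b bs where hb: "bs0 = b # bs" "R c b" "list_all2 R w bs" by (auto simp: list_all2_Cons1)
    have h: "x = Some q" "c \<in> Al" "w \<in> lists Al" "R c b" "list_all2 R w bs"
      "path M p (b # bs) q" using h0 hb by auto
    then obtain q1 where q1: "(p, b, q1) \<in> trans M" "path M q1 bs q" by auto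
    have "path (bodyA Al M R r s) (Some q1) w x" using Cons.IH h q1 by blast
    moreover have "(Some p, c, Some q1) \<in> trans (bodyA Al M R r s)" using h q1 by auto
    ultimately show "path (bodyA Al M R r s) (Some p) (c # w) x" by auto
  qed
qed

lemma lang_bodyA: "lang (bodyA Al M R r s) =
   {c # w | c w. c \<in> Al \<and> w \<in> lists Al \<and> (\<exists>bs. list_all2 R w bs \<and> path M r bs s)}"
proof -
  have "path (bodyA Al M R r s) None w (Some s) \<longleftrightarrow>
     (\<exists>c w'. w = c # w' \<and> c \<in> Al \<and> w' \<in> lists Al \<and> (\<exists>bs. list_all2 R w' bs \<and> path M r bs s))" for w
    by (cases w) (auto simp: path_bodyA_Some)
  thus ?thesis unfolding lang_def by auto
qed

lemma wf_bodyA: assumes "finite Al" "finite (trans M)" shows "nfa_wf Al (bodyA Al M R r s)"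
proof -
  have "{(None, c, Some r) | c. c \<in> Al} \<subseteq> (\<lambda>c. (None, c, Some r)) ` Al" by auto
  hence 1: "finite {(None, c, Some r) | c. c \<in> Al}" using assms finite_subset by blast
  have "{(Some p, c, Some q) | p c q. c \<in> Al \<and> (\<exists>b. (p, b, q) \<in> trans M \<and> R c b)}
     \<subseteq> (\<lambda>((p, b, q), c). (Some p, c, Some q)) ` (trans M \<times> Al)" by force
  hence 2: "finite {(Some p, c, Some q) | p c q. c \<in> Al \<and> (\<exists>b. (p, b, q) \<in> trans M \<and> R c b)}"
    using assms finite_subset by blast
  have teq: "trans (bodyA Al M R r s) = {(None, c, Some r) | c. c \<in> Al} \<union>
             {(Some p, c, Some q) | p c q. c \<in> Al \<and> (\<exists>b. (p, b, q) \<in> trans M \<and> R c b)}"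
    by (simp add: bodyA_def)
  have f3: "finite (trans (bodyA Al M R r s))" unfolding teq using 1 2 by (rule finite_UnI)
  have l: "\<forall>(p, b, q)\<in>trans (bodyA Al M R r s). b \<in> Al"
  proof (clarify)
    fix x c y assume "(x, c, y) \<in> trans (bodyA Al M R r s)"
    thus "c \<in> Al" by (simp only: bodyA_simps) blast
  qed
  have i: "finite (init (bodyA Al M R r s))" "finite (final (bodyA Al M R r s))"
    by (simp_all only: bodyA_simps finite_insert finite.emptyI)
  show ?thesis unfolding nfa_wf_def using f3 l i by blast
qed

definition mapA :: "('q \<Rightarrow> nat) \<Rightarrow> ('q, 'b) nfa \<Rightarrow> (nat, 'b) nfa" where
  "mapA f B = \<lparr>init = f ` init B, final = f ` final B, trans = (\<lambda>(p, b, q). (f p, b, f q)) ` trans B\<rparr>"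

definition statesA :: "('q, 'b) nfa \<Rightarrow> 'q set" where
  "statesA B = init B \<union> final B \<union> fst ` trans B \<union> (\<lambda>(p, b, q). q) ` trans B"

lemma path_mapA1: "path B p w q \<Longrightarrow> path (mapA f B) (f p) w (f q)"
proof (induction rule: path.induct)
  case (path_cons p b q w r)
  have "(f p, b, f q) \<in> trans (mapA f B)" using path_cons by (force simp: mapA_def)
  thus ?case using path_cons by auto
qed (auto intro: path.path_nil)

lemma path_mapA2: "path (mapA f B) x w y \<Longrightarrow> inj_on f (statesA B) \<Longrightarrow> p \<in> statesA B \<Longrightarrow> f p = x
   \<Longrightarrow> \<exists>q\<in>statesA B. f q = y \<and> path B p w q"
proof (induction arbitrary: p rule: path.induct)
  case (path_nil p')
  then show ?case by auto
next
  case (path_cons x b z w y)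
  then obtain p' q' where t: "(p', b, q') \<in> trans B" "f p' = x" "f q' = z"
    by (auto simp: mapA_def)
  have "p' \<in> statesA B" "q' \<in> statesA B" using t(1) unfolding statesA_def by force+
  hence "p' = p" using path_cons t inj_on_def by metis
  obtain q where "q \<in> statesA B" "f q = y" "path B q' w q"
    using path_cons.IH[OF path_cons.prems(1) \<open>q' \<in> statesA B\<close> t(3)] by blast
  thus ?case using t \<open>p' = p\<close> by auto
qed

lemma natify_ex: fixes Al :: "'b set" and B :: "('q, 'b) nfa"
  assumes "nfa_wf Al B" shows "\<exists>B' :: (nat, 'b) nfa. nfa_wf Al B' \<and> lang B' = lang B"
proof -
  have fin: "finite (statesA B)" using assms unfolding nfa_wf_def statesA_def by auto
  obtain f :: "'q \<Rightarrow> nat" and n where f: "inj_on f (statesA B)"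
    using finite_imp_inj_to_nat_seg[OF fin] by blast
  have "lang (mapA f B) = lang B"
  proof
    show "lang (mapA f B) \<subseteq> lang B"
    proof
      fix w assume "w \<in> lang (mapA f B)"
      then obtain p y where p: "p \<in> init B" "y \<in> f ` final B" "path (mapA f B) (f p) w y"
        unfolding lang_def mapA_def by auto
      have "p \<in> statesA B" using p(1) by (auto simp: statesA_def)
      then obtain q where q: "q \<in> statesA B" "f q = y" "path B p w q" using path_mapA2[OF p(3) f] by blast
      obtain q' where q': "q' \<in> final B" "y = f q'" using p(2) by auto
      have "q' \<in> statesA B" using q'(1) by (auto simp: statesA_def)
      hence "q = q'" using q q' f inj_on_def by metis
      thus "w \<in> lang B" using p q q' unfolding lang_def by auto
    qed
  next
    show "lang B \<subseteq> lang (mapA f B)"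
    proof
      fix w assume "w \<in> lang B"
      then obtain p q where pq: "p \<in> init B" "q \<in> final B" "path B p w q" unfolding lang_def by auto
      have "f p \<in> init (mapA f B)" "f q \<in> final (mapA f B)"
        using pq by (auto simp: mapA_def)
      moreover have "path (mapA f B) (f p) w (f q)" using path_mapA1[OF pq(3)] .
      ultimately show "w \<in> lang (mapA f B)" unfolding lang_def by blast
    qed
  qed
  moreover have "nfa_wf Al (mapA f B)" using assms unfolding nfa_wf_def mapA_def by auto
  ultimately show ?thesis by blast
qed

definition natify :: "'b set \<Rightarrow> ('q, 'b) nfa \<Rightarrow> (nat, 'b) nfa" where
  "natify Al B = (SOME B'. nfa_wf Al B' \<and> lang B' = lang B)"

lemma natify: fixes Al :: "'b set" and B :: "('q, 'b) nfa"
  assumes "nfa_wf Al B" shows "nfa_wf Al (natify Al B) \<and> lang (natify Al B) = lang B"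
proof -
  obtain B' :: "(nat, 'b) nfa" where "nfa_wf Al B' \<and> lang B' = lang B" using natify_ex[OF assms] by blast
  thus ?thesis unfolding natify_def by (rule someI)
qed



lemma map_upt_single: "map L [a..<b] = [c] \<longleftrightarrow> b = Suc a \<and> c = L a"
  by (cases "a < b") (auto simp: upt_conv_Cons)

lemma segp_Cons: "p \<le> q \<Longrightarrow> segp L p q = L p # map L [Suc p..<Suc q]"
  unfolding segp_def by (simp add: upt_conv_Cons del: upt_Suc)

lemma segp_empty: "q < p \<Longrightarrow> segp L p q = []"
  unfolding segp_def by simp

lemma segp_single: "segp L p q = [c] \<longleftrightarrow> p = q \<and> c = L p"
  unfolding segp_def map_upt_single by auto

lemma segp_two: "segp L p q = [c, c'] \<longleftrightarrow> q = Suc p \<and> c = L p \<and> c' = L q"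
proof (cases "p \<le> q")
  case True
  show ?thesis unfolding segp_Cons[OF True] using map_upt_single[of L "Suc p" "Suc q" c'] by auto
next
  case False
  thus ?thesis by (simp add: segp_empty)
qed

lemma segp_ostep: "segp L p q \<in> lang (ostep Al P) \<longleftrightarrow> p = q \<and> L p \<in> Al \<and> P (L p)"
  unfolding lang_ostep using segp_single by fastforce

lemma segp_tstep: "segp L p q \<in> lang (tstep Al P) \<longleftrightarrow> q = Suc p \<and> L p \<in> Al \<and> L q \<in> Al \<and> P (L q)"
  unfolding lang_tstep using segp_two by fastforce

lemma segp_body:
  assumes "finite Al" "finite (trans M)" "\<forall>j. L j \<in> Al"
  shows "segp L p q \<in> lang (natify Al (bodyA Al M R r s)) \<longleftrightarrow> p \<le> q \<and> GP (\<lambda>j b. R (L j) b) M r p q s"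
proof -
  have l: "lang (natify Al (bodyA Al M R r s)) = lang (bodyA Al M R r s)"
    using natify[OF wf_bodyA[OF assms(1,2)]] by blast
  show ?thesis
  proof (cases "p \<le> q")
    case True
    have "map L [Suc p..<Suc q] \<in> lists Al" using assms(3) by auto
    thus ?thesis unfolding l lang_bodyA segp_Cons[OF True] GP_def using True assms(3)
      by (auto simp: list_all2_map1)
  next
    case False
    thus ?thesis unfolding l lang_bodyA by (simp add: segp_empty)
  qed
qed

fun chain :: "(intv \<times> (nat, nat set) nfa) list \<Rightarrow> (nat, nat set) nfa \<Rightarrow> (nat \<Rightarrow> nat set)
    \<Rightarrow> (nat \<Rightarrow> real) \<Rightarrow> nat \<Rightarrow> nat \<Rightarrow> bool" where
  "chain [] B L d n p = (p \<le> n \<and> segp L p n \<in> lang B)"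
| "chain ((I, A) # xs) B L d n p =
     (\<exists>p'. p \<le> p' \<and> p' \<le> n \<and> in_intv (d p') I \<and> segp L p p' \<in> lang A \<and> chain xs B L d n p')"

lemma chain_le: "chain xs B L d n p \<Longrightarrow> p \<le> n"
  by (induction xs arbitrary: p) force+

abbreviation len1 :: "nat set set \<Rightarrow> (nat, nat set) nfa" where
  "len1 Al \<equiv> ostep Al (\<lambda>_. True)"

lemma chain_checks:
  assumes "\<forall>j. L j \<in> Al"
  shows "chain (map (\<lambda>I. (h I, len1 Al)) Is @ xs) B L d n p \<longleftrightarrow>
           (\<forall>I\<in>set Is. in_intv (d p) (h I)) \<and> chain xs B L d n p"
proof (induction Is)
  case Nil
  then show ?case by simp
next
  case (Cons I Is)
  have "chain (map (\<lambda>I. (h I, len1 Al)) (I # Is) @ xs) B L d n p \<longleftrightarrow>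
     (p \<le> n \<and> in_intv (d p) (h I) \<and> chain (map (\<lambda>I. (h I, len1 Al)) Is @ xs) B L d n p)"
    using assms by (auto simp: segp_ostep)
  also have "\<dots> \<longleftrightarrow> in_intv (d p) (h I) \<and> chain (map (\<lambda>I. (h I, len1 Al)) Is @ xs) B L d n p"
    using chain_le by blast
  finally show ?case using Cons by auto
qed

lemma chain_len1_head:
  assumes "\<forall>j. L j \<in> Al"
  shows "chain ((I, len1 Al) # xs) B L d n p \<longleftrightarrow> in_intv (d p) I \<and> chain xs B L d n p"
  using chain_checks[OF assms, of "\<lambda>x. x" "[I]" xs B d n p] by simp

definition fsg :: "intv list \<Rightarrow> (nat, nat set) nfa list \<Rightarrow> (nat \<Rightarrow> nat set) \<Rightarrow> (nat \<Rightarrow> real)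
    \<Rightarrow> nat \<Rightarrow> nat \<Rightarrow> bool" where
  "fsg Is As L d n p \<longleftrightarrow> (\<exists>ix :: nat \<Rightarrow> nat. ix 0 = p \<and> (\<forall>w<length Is. ix w \<le> ix (Suc w)) \<and>
     ix (length Is) \<le> n \<and>
     (\<forall>w\<in>{1..length Is}. in_intv (d (ix w)) (Is ! (w - 1)) \<and>
         segp L (ix (w - 1)) (ix w) \<in> lang (As ! (w - 1))) \<and>
     segp L (ix (length Is)) n \<in> lang (As ! length Is))"

lemma fut_sem_fsg: "fut_sem Is As L \<rho> i0 = fsg Is As L (\<lambda>j. tau \<rho> j - tau \<rho> i0) (length \<rho>) i0"
  unfolding fut_sem_def fsg_def Let_def by simp

lemma mono_chain_le:
  assumes "\<forall>w<k. ix w \<le> ix (Suc w)" "a \<le> b" "b \<le> k"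
  shows "ix a \<le> (ix b :: nat)"
  using assms(2,3)
proof (induction b)
  case 0
  then show ?case by simp
next
  case (Suc b)
  show ?case
  proof (cases "a = Suc b")
    case False
    hence "ix a \<le> ix b" using Suc by simp
    also have "ix b \<le> ix (Suc b)" using assms(1) Suc.prems by simp
    finally show ?thesis .
  qed simp
qed

lemma antimono_chain_le:
  assumes "\<forall>w<k. ix (Suc w) \<le> ix w" "a \<le> b" "b \<le> k"
  shows "ix b \<le> (ix a :: nat)"
  using assms(2,3)
proof (induction b)
  case 0
  then show ?case by simp
next
  case (Suc b)
  show ?case
  proof (cases "a = Suc b")
    case False
    hence "ix b \<le> ix a" using Suc by simp
    moreover have "ix (Suc b) \<le> ix b" using assms(1) Suc.prems by simp
    ultimately show ?thesis by simp
  qed simp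
qed

lemma fsg_Nil: "fsg [] As L d n p \<longleftrightarrow> p \<le> n \<and> segp L p n \<in> lang (As ! 0)"
proof
  assume "fsg [] As L d n p"
  then show "p \<le> n \<and> segp L p n \<in> lang (As ! 0)" unfolding fsg_def by auto
next
  assume "p \<le> n \<and> segp L p n \<in> lang (As ! 0)"
  then show "fsg [] As L d n p" unfolding fsg_def by (intro exI[of _ "\<lambda>_. p"]) auto
qed

lemma fsg_Cons: "fsg (I # Is) (A # As) L d n p \<longleftrightarrow>
   (\<exists>p'. p \<le> p' \<and> p' \<le> n \<and> in_intv (d p') I \<and> segp L p p' \<in> lang A \<and> fsg Is As L d n p')"
proof
  assume "fsg (I # Is) (A # As) L d n p"
  then obtain ix where ix0: "ix 0 = p" and mo: "\<forall>w<Suc (length Is). ix w \<le> ix (Suc w)"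
    and le: "ix (Suc (length Is)) \<le> n"
    and cond: "\<forall>w\<in>{1..Suc (length Is)}. in_intv (d (ix w)) ((I # Is) ! (w - 1)) \<and>
         segp L (ix (w - 1)) (ix w) \<in> lang ((A # As) ! (w - 1))"
    and last: "segp L (ix (Suc (length Is))) n \<in> lang ((A # As) ! Suc (length Is))"
    unfolding fsg_def by auto
  have "ix 1 \<le> ix (Suc (length Is))" by (rule mono_chain_le[OF mo]) auto
  hence "ix 1 \<le> n" using le by simp
  moreover have "p \<le> ix 1" using mo ix0 by (metis One_nat_def zero_less_Suc)
  moreover have "in_intv (d (ix 1)) I" "segp L p (ix 1) \<in> lang A" using cond[rule_format, of 1] ix0 by auto
  moreover have "fsg Is As L d n (ix 1)"
    unfolding fsg_def
  proof (intro exI[of _ "\<lambda>w. ix (Suc w)"] conjI)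
    show "\<forall>w<length Is. ix (Suc w) \<le> ix (Suc (Suc w))" using mo by auto
    show "\<forall>w\<in>{1..length Is}. in_intv (d (ix (Suc w))) (Is ! (w - 1)) \<and>
         segp L (ix (Suc (w - 1))) (ix (Suc w)) \<in> lang (As ! (w - 1))"
    proof
      fix w assume w: "w \<in> {1..length Is}"
      hence "Suc w \<in> {1..Suc (length Is)}" by auto
      from cond[rule_format, OF this] w show "in_intv (d (ix (Suc w))) (Is ! (w - 1)) \<and>
         segp L (ix (Suc (w - 1))) (ix (Suc w)) \<in> lang (As ! (w - 1))"
        by (cases w) auto
    qed
  qed (use le last in auto)
  ultimately show "\<exists>p'. p \<le> p' \<and> p' \<le> n \<and> in_intv (d p') I \<and> segp L p p' \<in> lang A \<and> fsg Is As L d n p'"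
    by blast
next
  assume "\<exists>p'. p \<le> p' \<and> p' \<le> n \<and> in_intv (d p') I \<and> segp L p p' \<in> lang A \<and> fsg Is As L d n p'"
  then obtain p' ix where h: "p \<le> p'" "in_intv (d p') I" "segp L p p' \<in> lang A"
    and ix0: "ix 0 = p'" and mo: "\<forall>w<length Is. ix w \<le> ix (Suc w)"
    and le: "ix (length Is) \<le> n"
    and cond: "\<forall>w\<in>{1..length Is}. in_intv (d (ix w)) (Is ! (w - 1)) \<and>
         segp L (ix (w - 1)) (ix w) \<in> lang (As ! (w - 1))"
    and last: "segp L (ix (length Is)) n \<in> lang (As ! length Is)"
    unfolding fsg_def by blast
  define jx where "jx w = (case w of 0 \<Rightarrow> p | Suc w' \<Rightarrow> ix w')" for w
  show "fsg (I # Is) (A # As) L d n p"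
    unfolding fsg_def
  proof (intro exI[of _ jx] conjI)
    show "jx 0 = p" by (simp add: jx_def)
    show "\<forall>w<length (I # Is). jx w \<le> jx (Suc w)"
    proof (intro allI impI)
      fix w assume "w < length (I # Is)"
      thus "jx w \<le> jx (Suc w)" using mo h(1) ix0 by (cases w) (auto simp: jx_def)
    qed
    show "jx (length (I # Is)) \<le> n" using le by (simp add: jx_def)
    show "\<forall>w\<in>{1..length (I # Is)}. in_intv (d (jx w)) ((I # Is) ! (w - 1)) \<and>
       segp L (jx (w - 1)) (jx w) \<in> lang ((A # As) ! (w - 1))"
    proof
      fix w assume w: "w \<in> {1..length (I # Is)}"
      then obtain w' where w': "w = Suc w'" by (cases w) auto
      show "in_intv (d (jx w)) ((I # Is) ! (w - 1)) \<and> segp L (jx (w - 1)) (jx w) \<in> lang ((A # As) ! (w - 1))"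
      proof (cases w')
        case 0
        then show ?thesis using w' h ix0 by (simp add: jx_def)
      next
        case (Suc v)
        have "w' \<in> {1..length Is}" using w w' Suc by auto
        from cond[rule_format, OF this] show ?thesis using w' Suc by (simp add: jx_def)
      qed
    qed
    show "segp L (jx (length (I # Is))) n \<in> lang ((A # As) ! length (I # Is))"
      using last by (simp add: jx_def)
  qed
qed

lemma fsg_chain: "length As = Suc (length Is) \<Longrightarrow>
    fsg Is As L d n p \<longleftrightarrow> chain (zip Is As) (last As) L d n p"
proof (induction Is arbitrary: As p)
  case Nil
  then obtain B where "As = [B]" by (cases As) auto
  then show ?case by (simp add: fsg_Nil)
next
  case (Cons I Is)
  then obtain A As' where As: "As = A # As'" "length As' = Suc (length Is)" by (cases As) auto
  hence "As' \<noteq> []" by auto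
  thus ?case using Cons.IH[OF As(2)] unfolding As(1) by (simp add: fsg_Cons)
qed

lemma rev_upt_refl:
  assumes "1 \<le> x" "y \<le> n"
  shows "rev [x..<Suc y] = map (\<lambda>j. n + 1 - j) [n + 1 - y..<Suc (n + 1 - x)]"
  proof (rule nth_equalityI)
    show "length (rev [x..<Suc y]) = length (map (\<lambda>j. n + 1 - j) [n + 1 - y..<Suc (n + 1 - x)])"
      using assms by (simp only: length_rev length_map length_upt)
    fix k assume "k < length (rev [x..<Suc y])"
    hence k: "k < Suc y - x" by (simp del: upt_Suc)
    thus "rev [x..<Suc y] ! k = map (\<lambda>j. n + 1 - j) [n + 1 - y..<Suc (n + 1 - x)] ! k"
    proof -
      have l1: "length [x..<Suc y] = Suc y - x" by (simp only: length_upt)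
      have "rev [x..<Suc y] ! k = [x..<Suc y] ! (Suc y - x - Suc k)"
        using k l1 by (simp add: rev_nth del: upt_Suc)
      also have "\<dots> = x + (Suc y - x - Suc k)" using k by (simp add: nth_upt del: upt_Suc)
      also have "\<dots> = n + 1 - (n + 1 - y + k)" using k assms by arith
      also have "\<dots> = (\<lambda>j. n + 1 - j) ([n + 1 - y..<Suc (n + 1 - x)] ! k)"
      proof -
        have "n + 1 - y + k < Suc (n + 1 - x)" using k assms by arith
        thus ?thesis by (simp add: nth_upt del: upt_Suc)
      qed
      also have "\<dots> = map (\<lambda>j. n + 1 - j) [n + 1 - y..<Suc (n + 1 - x)] ! k"
      proof -
        have "k < length [n + 1 - y..<Suc (n + 1 - x)]" using k assms by (simp del: upt_Suc)
        thus ?thesis by simp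
      qed
      finally show ?thesis .
    qed
  qed

lemma segm_refl:
  assumes "1 \<le> x" "y \<le> n"
  shows "segm L y x = segp (\<lambda>j. L (n + 1 - j)) (n + 1 - y) (n + 1 - x)"
proof -
  note r = rev_upt_refl[OF assms]
  show ?thesis unfolding segm_def segp_def r by (simp only: map_map comp_def)
qed

lemma past_fsg:
  assumes "1 \<le> i0" "i0 \<le> length \<rho>"
  shows "past_sem Is As L \<rho> i0 \<longleftrightarrow>
    fsg Is As (\<lambda>j. L (length \<rho> + 1 - j)) (\<lambda>j. tau \<rho> i0 - tau \<rho> (length \<rho> + 1 - j)) (length \<rho>)
        (length \<rho> + 1 - i0)"
    (is "?l \<longleftrightarrow> fsg Is As ?L ?d ?n ?p")
proof
  let ?k = "length Is"
  assume ?l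
  then obtain ix where ix0: "ix 0 = i0" and mo: "\<forall>w<?k. ix (Suc w) \<le> ix w" and ge: "1 \<le> ix ?k"
    and cond: "\<forall>w\<in>{1..?k}. in_intv (tau \<rho> i0 - tau \<rho> (ix w)) (Is ! (w - 1)) \<and>
                    segm L (ix (w - 1)) (ix w) \<in> lang (As ! (w - 1))"
    and last: "segm L (ix ?k) 1 \<in> lang (As ! ?k)"
    unfolding past_sem_def Let_def by blast
  have bnd: "1 \<le> ix w \<and> ix w \<le> ?n" if "w \<le> ?k" for w
  proof -
    have "ix ?k \<le> ix w" by (rule antimono_chain_le[OF mo that]) simp
    moreover have "ix w \<le> ix 0" by (rule antimono_chain_le[OF mo]) (use that in auto)
    ultimately show ?thesis using ge ix0 assms by simp
  qed
  show "fsg Is As ?L ?d ?n ?p"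
    unfolding fsg_def
  proof (intro exI[of _ "\<lambda>w. ?n + 1 - ix w"] conjI)
    show "?n + 1 - ix 0 = ?p" using ix0 by simp
    show "\<forall>w<?k. ?n + 1 - ix w \<le> ?n + 1 - ix (Suc w)" using mo by auto
    show "?n + 1 - ix ?k \<le> ?n" using ge by simp
    show "\<forall>w\<in>{1..?k}. in_intv (?d (?n + 1 - ix w)) (Is ! (w - 1)) \<and>
         segp ?L (?n + 1 - ix (w - 1)) (?n + 1 - ix w) \<in> lang (As ! (w - 1))"
    proof
      fix w assume w: "w \<in> {1..?k}"
      have b1: "1 \<le> ix w" "ix w \<le> ?n" using bnd w by auto
      have b2: "ix (w - 1) \<le> ?n" using bnd w by auto
      have e: "?n + 1 - (?n + 1 - ix w) = ix w" using b1 by simp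
      show "in_intv (?d (?n + 1 - ix w)) (Is ! (w - 1)) \<and>
         segp ?L (?n + 1 - ix (w - 1)) (?n + 1 - ix w) \<in> lang (As ! (w - 1))"
        using cond[rule_format, OF w] segm_refl[OF b1(1) b2, of L] e by simp
    qed
    show "segp ?L (?n + 1 - ix ?k) ?n \<in> lang (As ! ?k)"
      using last segm_refl[of 1 "ix ?k" ?n L] bnd[of ?k] by simp
  qed
next
  let ?k = "length Is"
  assume "fsg Is As ?L ?d ?n ?p"
  then obtain ix where ix0: "ix 0 = ?p" and mo: "\<forall>w<?k. ix w \<le> ix (Suc w)" and le: "ix ?k \<le> ?n"
    and cond: "\<forall>w\<in>{1..?k}. in_intv (?d (ix w)) (Is ! (w - 1)) \<and>
         segp ?L (ix (w - 1)) (ix w) \<in> lang (As ! (w - 1))"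
    and last: "segp ?L (ix ?k) ?n \<in> lang (As ! ?k)"
    unfolding fsg_def by blast
  have bnd: "1 \<le> ix w \<and> ix w \<le> ?n" if "w \<le> ?k" for w
  proof -
    have "ix w \<le> ix ?k" by (rule mono_chain_le[OF mo that]) simp
    moreover have "ix 0 \<le> ix w" by (rule mono_chain_le[OF mo]) (use that in auto)
    ultimately show ?thesis using le ix0 assms by simp
  qed
  show ?l
    unfolding past_sem_def Let_def
  proof (intro exI[of _ "\<lambda>w. ?n + 1 - ix w"] conjI)
    show "?n + 1 - ix 0 = i0" using ix0 assms by simp
    show "\<forall>w<?k. ?n + 1 - ix (Suc w) \<le> ?n + 1 - ix w" using mo by auto
    show "1 \<le> ?n + 1 - ix ?k" using le by simp
    show "\<forall>w\<in>{1..?k}. in_intv (tau \<rho> i0 - tau \<rho> (?n + 1 - ix w)) (Is ! (w - 1)) \<and>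
         segm L (?n + 1 - ix (w - 1)) (?n + 1 - ix w) \<in> lang (As ! (w - 1))"
    proof
      fix w assume w: "w \<in> {1..?k}"
      have b1: "1 \<le> ix w" "ix w \<le> ?n" using bnd w by auto
      have b2: "1 \<le> ix (w - 1)" "ix (w - 1) \<le> ?n" using bnd w by auto
      have s: "segm L (?n + 1 - ix (w - 1)) (?n + 1 - ix w) = segp ?L (ix (w - 1)) (ix w)"
        using segm_refl[of "?n + 1 - ix w" "?n + 1 - ix (w - 1)" ?n L] b1 b2 by simp
      show "in_intv (tau \<rho> i0 - tau \<rho> (?n + 1 - ix w)) (Is ! (w - 1)) \<and>
         segm L (?n + 1 - ix (w - 1)) (?n + 1 - ix w) \<in> lang (As ! (w - 1))"
        using cond[rule_format, OF w] s by simp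
    qed
    have b: "1 \<le> ix ?k" "ix ?k \<le> ?n" using bnd[of ?k] by auto
    have y: "?n + 1 - ix ?k \<le> ?n" using b by arith
    have e: "?n + 1 - (?n + 1 - ix ?k) = ix ?k" using b by arith
    have "segm L (?n + 1 - ix ?k) 1 = segp ?L (ix ?k) ?n"
      using segm_refl[of 1 "?n + 1 - ix ?k" ?n L, OF _ y] e by simp
    thus "segm L (?n + 1 - ix ?k) 1 \<in> lang (As ! ?k)" using last by simp
  qed
qed



definition lst :: "'a set \<Rightarrow> 'a list" where "lst T = (SOME xs. set xs = T)"

lemma set_lst: "finite T \<Longrightarrow> set (lst T) = T"
  unfolding lst_def by (rule someI_ex) (rule finite_list)

definition Eaut :: "nat set set \<Rightarrow> ('q, 'b) nfa \<Rightarrow> (nat set \<Rightarrow> 'b \<Rightarrow> bool) \<Rightarrow> 'q \<Rightarrow> 'q \<Rightarrow> (nat, nat set) nfa" where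
  "Eaut Al M R s r = tstep Al (\<lambda>c. \<exists>b. (s, b, r) \<in> trans M \<and> R c b)"

definition Bd :: "nat set set \<Rightarrow> ('q, 'b) nfa \<Rightarrow> (nat set \<Rightarrow> 'b \<Rightarrow> bool) \<Rightarrow> 'q \<Rightarrow> 'q \<Rightarrow> (nat, nat set) nfa" where
  "Bd Al M R r s = natify Al (bodyA Al M R r s)"

fun bitems :: "nat set set \<Rightarrow> (intv \<Rightarrow> intv) \<Rightarrow> ('q, 'b) nfa \<Rightarrow> (intv set \<Rightarrow> nat set \<Rightarrow> 'b \<Rightarrow> bool)
    \<Rightarrow> 'q \<Rightarrow> (intv set \<times> 'q \<times> 'q) list \<Rightarrow> (intv \<times> (nat, nat set) nfa) list" where
  "bitems Al h M R s [] = []"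
| "bitems Al h M R s ((T, r, s') # cf) =
     (univI, Eaut Al M (R T) s r) # map (\<lambda>I. (h I, len1 Al)) (lst T) @
     (univI, Bd Al M (R T) r s') # map (\<lambda>I. (h I, len1 Al)) (lst T) @ bitems Al h M R s' cf"

fun endst :: "'q \<Rightarrow> (intv set \<times> 'q \<times> 'q) list \<Rightarrow> 'q" where
  "endst s [] = s"
| "endst s ((T, r, s') # cf) = endst s' cf"

lemma chain_bitems_Cons:
  assumes fin: "finite Al" "finite (trans M)" and L: "\<forall>j. L j \<in> Al" and fT: "finite T"
  shows "chain (bitems Al h M R s ((T, r, s') # cf)) B L d n p \<longleftrightarrow>
    (\<exists>b. (s, b, r) \<in> trans M \<and> R T (L (Suc p)) b) \<and> (\<forall>I\<in>T. in_intv (d (Suc p)) (h I)) \<and>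
    (\<exists>q. Suc p \<le> q \<and> q \<le> n \<and> GP (\<lambda>j b. R T (L j) b) M r (Suc p) q s' \<and>
        (\<forall>I\<in>T. in_intv (d q) (h I)) \<and> chain (bitems Al h M R s' cf) B L d n q)"
proof -
  have b: "segp L x y \<in> lang (Bd Al M (R T) r s') \<longleftrightarrow> x \<le> y \<and> GP (\<lambda>j b. R T (L j) b) M r x y s'" for x y
    unfolding Bd_def by (rule segp_body[OF fin L])
  have e: "segp L x y \<in> lang (Eaut Al M (R T) s r) \<longleftrightarrow>
       y = Suc x \<and> (\<exists>b. (s, b, r) \<in> trans M \<and> R T (L y) b)" for x y
    unfolding Eaut_def segp_tstep using L by auto
  have c: "chain (map (\<lambda>I. (h I, len1 Al)) (lst T) @ xs) B L d n x \<longleftrightarrow>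
     (\<forall>I\<in>T. in_intv (d x) (h I)) \<and> chain xs B L d n x" for xs x
    using chain_checks[OF L, of h "lst T" xs B d n x] set_lst[OF fT] by simp
  show ?thesis
  proof
    assume "chain (bitems Al h M R s ((T, r, s') # cf)) B L d n p"
    then obtain p' where h1: "p \<le> p'" "p' \<le> n" "segp L p p' \<in> lang (Eaut Al M (R T) s r)"
      "chain (map (\<lambda>I. (h I, len1 Al)) (lst T) @ (univI, Bd Al M (R T) r s') #
         map (\<lambda>I. (h I, len1 Al)) (lst T) @ bitems Al h M R s' cf) B L d n p'" by auto
    from h1(3) e have p': "p' = Suc p" "\<exists>b. (s, b, r) \<in> trans M \<and> R T (L (Suc p)) b" by auto
    from h1(4) c have ck: "\<forall>I\<in>T. in_intv (d p') (h I)" and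
      ch: "chain ((univI, Bd Al M (R T) r s') #
         map (\<lambda>I. (h I, len1 Al)) (lst T) @ bitems Al h M R s' cf) B L d n p'" by auto
    from ch obtain q where q: "p' \<le> q" "q \<le> n" "segp L p' q \<in> lang (Bd Al M (R T) r s')"
      "chain (map (\<lambda>I. (h I, len1 Al)) (lst T) @ bitems Al h M R s' cf) B L d n q" by auto
    from q(4) c have "\<forall>I\<in>T. in_intv (d q) (h I)" "chain (bitems Al h M R s' cf) B L d n q" by auto
    thus "(\<exists>b. (s, b, r) \<in> trans M \<and> R T (L (Suc p)) b) \<and> (\<forall>I\<in>T. in_intv (d (Suc p)) (h I)) \<and>
    (\<exists>q. Suc p \<le> q \<and> q \<le> n \<and> GP (\<lambda>j b. R T (L j) b) M r (Suc p) q s' \<and>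
        (\<forall>I\<in>T. in_intv (d q) (h I)) \<and> chain (bitems Al h M R s' cf) B L d n q)"
      using p' ck q b by auto
  next
    assume "(\<exists>b. (s, b, r) \<in> trans M \<and> R T (L (Suc p)) b) \<and> (\<forall>I\<in>T. in_intv (d (Suc p)) (h I)) \<and>
    (\<exists>q. Suc p \<le> q \<and> q \<le> n \<and> GP (\<lambda>j b. R T (L j) b) M r (Suc p) q s' \<and>
        (\<forall>I\<in>T. in_intv (d q) (h I)) \<and> chain (bitems Al h M R s' cf) B L d n q)"
    then obtain q where h1: "\<exists>b. (s, b, r) \<in> trans M \<and> R T (L (Suc p)) b" "\<forall>I\<in>T. in_intv (d (Suc p)) (h I)"
      "Suc p \<le> q" "q \<le> n" "GP (\<lambda>j b. R T (L j) b) M r (Suc p) q s'"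
      "\<forall>I\<in>T. in_intv (d q) (h I)" "chain (bitems Al h M R s' cf) B L d n q" by blast
    have "chain (map (\<lambda>I. (h I, len1 Al)) (lst T) @ bitems Al h M R s' cf) B L d n q"
      using c h1 by blast
    hence "chain ((univI, Bd Al M (R T) r s') #
         map (\<lambda>I. (h I, len1 Al)) (lst T) @ bitems Al h M R s' cf) B L d n (Suc p)"
      using h1 b by auto
    hence "chain (map (\<lambda>I. (h I, len1 Al)) (lst T) @ (univI, Bd Al M (R T) r s') #
         map (\<lambda>I. (h I, len1 Al)) (lst T) @ bitems Al h M R s' cf) B L d n (Suc p)"
      using c h1 by blast
    thus "chain (bitems Al h M R s ((T, r, s') # cf)) B L d n p"
      using h1 e by auto
  qed
qed

lemma bitems_sound:
  assumes fin: "finite Al" "finite (trans M)" and L: "\<forall>j. L j \<in> Al"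
    and mono: "\<forall>j j'. p0 < j \<longrightarrow> j \<le> j' \<longrightarrow> j' \<le> n \<longrightarrow> d j \<le> d j'"
  shows "chain (bitems Al h M R s cf) (len1 Al) L d n p \<Longrightarrow> p0 \<le> p \<Longrightarrow> \<forall>x\<in>set cf. finite (fst x) \<Longrightarrow>
    GP (\<lambda>j b. \<exists>T. (\<forall>I\<in>T. in_intv (d j) (h I)) \<and> R T (L j) b) M s p n (endst s cf)"
proof (induction cf arbitrary: s p)
  case Nil
  then have "p = n" using L by (simp add: segp_ostep)
  then show ?case by (simp add: GP_refl)
next
  case (Cons x cf)
  obtain T r s' where x: "x = (T, r, s')" by (cases x) auto
  have fT: "finite T" using Cons.prems(3) x by auto
  let ?G = "\<lambda>j b. \<exists>T. (\<forall>I\<in>T. in_intv (d j) (h I)) \<and> R T (L j) b"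
  obtain b q where h: "(s, b, r) \<in> trans M" "R T (L (Suc p)) b" "\<forall>I\<in>T. in_intv (d (Suc p)) (h I)"
      "Suc p \<le> q" "q \<le> n" "GP (\<lambda>j b. R T (L j) b) M r (Suc p) q s'"
      "\<forall>I\<in>T. in_intv (d q) (h I)" "chain (bitems Al h M R s' cf) (len1 Al) L d n q"
    using Cons.prems(1) unfolding x chain_bitems_Cons[OF fin L fT] by blast
  have 1: "GP ?G M s p (Suc p) r" unfolding GP_step using h by blast
  have 2: "GP ?G M r (Suc p) q s'"
  proof (rule GP_mono[OF h(6)])
    fix j b assume j: "Suc p < j" "j \<le> q" "R T (L j) b"
    have "\<forall>I\<in>T. in_intv (d j) (h I)"
    proof
      fix I assume "I \<in> T"
      moreover have "d (Suc p) \<le> d j" using mono[rule_format, of "Suc p" j] j Cons.prems(2) h(5) by simp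
      moreover have "d j \<le> d q" using mono[rule_format, of j q] j Cons.prems(2) h(5) by simp
      ultimately show "in_intv (d j) (h I)" using h(3,7) in_intv_convex by blast
    qed
    thus "?G j b" using j by blast
  qed
  have q0: "p0 \<le> q" using Cons.prems(2) h(4) by simp
  have fc: "\<forall>x\<in>set cf. finite (fst x)" using Cons.prems(3) by simp
  have 3: "GP ?G M s' q n (endst s' cf)" by (rule Cons.IH[OF h(8) q0 fc])
  have sp1: "p \<le> Suc p" by simp
  have sp2: "p \<le> q" using h(4) by simp
  have "GP ?G M s p q s'" unfolding GP_split[OF sp1 h(4)] using 1 2 by blast
  hence "GP ?G M s p n (endst s' cf)" unfolding GP_split[OF sp2 h(5)] using 3 by blast
  thus ?case unfolding x by simp
qed

definition tg :: "('q, 'b) nfa \<Rightarrow> 'q set" where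
  "tg M = (\<lambda>(p, b, q). q) ` trans M"

lemma bitems_complete:
  assumes fin: "finite Al" "finite (trans M)" and L: "\<forall>j. L j \<in> Al" and finK: "finite K"
    and ty: "\<And>j. ty j = {I\<in>K. in_intv (d j) (h I)}"
  shows "GP (\<lambda>j b. R (ty j) (L j) b) M s p n sf \<Longrightarrow> p \<le> n \<Longrightarrow>
    \<exists>cf. length cf \<le> (if p < n then card {j. p < j \<and> j < n \<and> ty j \<noteq> ty (Suc j)} + 1 else 0) \<and>
      (\<forall>x\<in>set cf. fst x \<subseteq> K \<and> fst (snd x) \<in> tg M \<and> snd (snd x) \<in> tg M) \<and>
      endst s cf = sf \<and> chain (bitems Al h M R s cf) (len1 Al) L d n p"
proof (induction "n - p" arbitrary: p s rule: less_induct)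
  case less
  let ?G = "\<lambda>j b. R (ty j) (L j) b"
  let ?C = "\<lambda>p. {j. p < j \<and> j < n \<and> ty j \<noteq> ty (Suc j)}"
  show ?case
  proof (cases "p = n")
    case True
    have "s = sf" using less.prems(1) unfolding True GP_refl .
    thus ?thesis using True L by (intro exI[of _ "[]"]) (simp add: segp_ostep)
  next
    case False
    hence pn: "p < n" using less.prems by simp
    define a where "a = Suc p"
    define T where "T = ty a"
    define S where "S = {j. a \<le> j \<and> j \<le> n \<and> (\<forall>j'. a \<le> j' \<longrightarrow> j' \<le> j \<longrightarrow> ty j' = T)}"
    define bb where "bb = Max S"
    have finS: "finite S" unfolding S_def by (rule finite_subset[of _ "{..n}"]) auto
    have aS: "a \<in> S" unfolding S_def T_def a_def using pn by auto
    have bbS: "bb \<in> S" unfolding bb_def using finS aS Max_in by blast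
    hence bb: "a \<le> bb" "bb \<le> n" "\<And>j'. a \<le> j' \<Longrightarrow> j' \<le> bb \<Longrightarrow> ty j' = T" unfolding S_def by auto
    have maxi: "ty (Suc bb) \<noteq> T" if "bb < n"
    proof
      assume "ty (Suc bb) = T"
      hence "Suc bb \<in> S" using bb that unfolding S_def by (auto simp: le_Suc_eq)
      hence "Suc bb \<le> bb" unfolding bb_def using finS by simp
      thus False by simp
    qed
    have pa: "p \<le> a" "a \<le> n" using pn a_def by auto
    from less.prems(1)[unfolded GP_split[OF pa]]
    obtain x where x1: "GP ?G M s p a x" and x2: "GP ?G M x a n sf" by blast
    from x2[unfolded GP_split[OF bb(1,2)]]
    obtain y where y1: "GP ?G M x a bb y" and y2: "GP ?G M y bb n sf" by blast
    from x1[unfolded a_def GP_step]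
    obtain b where b: "R (ty a) (L a) b" "(s, b, x) \<in> trans M" unfolding a_def by blast
    have xt: "x \<in> tg M" using b(2) unfolding tg_def by force
    have yb: "GP (\<lambda>j b. R T (L j) b) M x a bb y"
      by (rule GP_mono[OF y1]) (use bb in auto)
    have yt: "y \<in> tg M"
    proof -
      obtain bs where "path M x bs y" using y1 unfolding GP_def by blast
      from path_target[OF this] show ?thesis using xt unfolding tg_def by force
    qed
    obtain cf' where cf': "length cf' \<le> (if bb < n then card (?C bb) + 1 else 0)"
      "\<forall>x\<in>set cf'. fst x \<subseteq> K \<and> fst (snd x) \<in> tg M \<and> snd (snd x) \<in> tg M"
      "endst y cf' = sf" "chain (bitems Al h M R y cf') (len1 Al) L d n bb"
    proof -
      have "n - bb < n - p" using bb(1,2) a_def pn by simp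
      from less.hyps[OF this y2 bb(2)] show ?thesis using that by blast
    qed
    have TK: "T \<subseteq> K" unfolding T_def ty by auto
    have fT: "finite T" using TK finK finite_subset by blast
    have ch: "chain (bitems Al h M R s ((T, x, y) # cf')) (len1 Al) L d n p"
      unfolding chain_bitems_Cons[OF fin L fT]
    proof (intro conjI exI[of _ bb])
      show "\<exists>b. (s, b, x) \<in> trans M \<and> R T (L (Suc p)) b" using b T_def a_def by auto
      show "\<forall>I\<in>T. in_intv (d (Suc p)) (h I)" using T_def a_def ty by auto
      show "Suc p \<le> bb" "bb \<le> n" using bb a_def by auto
      show "GP (\<lambda>j b. R T (L j) b) M x (Suc p) bb y" using yb a_def by simp
      have "ty bb = T" using bb by auto
      thus "\<forall>I\<in>T. in_intv (d bb) (h I)" using ty by auto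
      show "chain (bitems Al h M R y cf') (len1 Al) L d n bb" by (rule cf'(4))
    qed
    have len: "length ((T, x, y) # cf') \<le> card (?C p) + 1"
    proof (cases "bb < n")
      case False
      thus ?thesis using cf'(1) by simp
    next
      case True
      have "?C p = insert bb (?C bb)"
      proof (rule set_eqI, rule iffI)
        fix j assume j: "j \<in> ?C p"
        show "j \<in> insert bb (?C bb)"
        proof (cases "j < bb")
          case True
          hence "ty j = T" "ty (Suc j) = T" using bb j a_def by auto
          thus ?thesis using j by auto
        qed (use j in auto)
      next
        fix j assume "j \<in> insert bb (?C bb)"
        thus "j \<in> ?C p" using True maxi bb a_def by auto
      qed
      moreover have "finite (?C bb)" by (rule finite_subset[of _ "{..n}"]) auto
      ultimately have "card (?C p) = Suc (card (?C bb))" by simp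
      thus ?thesis using cf'(1) True by simp
    qed
    show ?thesis
    proof (intro exI[of _ "(T, x, y) # cf'"] conjI)
      show "length ((T, x, y) # cf') \<le> (if p < n then card (?C p) + 1 else 0)" using len pn by simp
      show "\<forall>z\<in>set ((T, x, y) # cf'). fst z \<subseteq> K \<and> fst (snd z) \<in> tg M \<and> snd (snd z) \<in> tg M"
        using cf'(2) TK xt yt by simp
      show "endst s ((T, x, y) # cf') = sf" using cf'(3) by simp
      show "chain (bitems Al h M R s ((T, x, y) # cf')) (len1 Al) L d n p" by (rule ch)
    qed
  qed
qed

lemma chg_bound:
  fixes K :: "intv set"
  assumes finK: "finite K"
    and ty: "\<And>j. ty j = {I\<in>K. in_intv (d j) (h I)}"
    and mono: "\<forall>j j'. p0 < j \<longrightarrow> j \<le> j' \<longrightarrow> j' \<le> n \<longrightarrow> d j \<le> d j'"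
  shows "card {j. p0 < j \<and> j < n \<and> ty j \<noteq> ty (Suc j)} \<le> 2 * card K"
proof -
  let ?C = "{j. p0 < j \<and> j < n \<and> ty j \<noteq> ty (Suc j)}"
  define P where "P j x = (fst x \<in> K \<and> (if snd x then fst x \<in> ty j \<and> fst x \<notin> ty (Suc j)
      else fst x \<notin> ty j \<and> fst x \<in> ty (Suc j)))" for j and x :: "intv \<times> bool"
  define f where "f j = (SOME x. P j x)" for j
  have conv: "I \<in> ty b" if "I \<in> ty a" "I \<in> ty c" "p0 < a" "a \<le> b" "b \<le> c" "c \<le> n" for I a b c
  proof -
    have "d a \<le> d b" using mono[rule_format, of a b] that by simp
    moreover have "d b \<le> d c" using mono[rule_format, of b c] that by simp
    ultimately show ?thesis using that ty in_intv_convex by blast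
  qed
  have Pf: "P j (f j)" if "j \<in> ?C" for j
  proof -
    from that have "ty j \<noteq> ty (Suc j)" by auto
    then obtain I where "I \<in> ty j \<and> I \<notin> ty (Suc j) \<or> I \<notin> ty j \<and> I \<in> ty (Suc j)" by blast
    moreover have "ty j \<subseteq> K" "ty (Suc j) \<subseteq> K" using ty by auto
    ultimately have "\<exists>x. P j x"
    proof (elim disjE)
      assume "I \<in> ty j \<and> I \<notin> ty (Suc j)" "ty j \<subseteq> K"
      hence "P j (I, True)" unfolding P_def by auto
      thus ?thesis by blast
    next
      assume "I \<notin> ty j \<and> I \<in> ty (Suc j)" "ty (Suc j) \<subseteq> K"
      hence "P j (I, False)" unfolding P_def by auto
      thus ?thesis by blast
    qed
    thus ?thesis unfolding f_def by (rule someI_ex)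
  qed
  have key: "\<not> (P j1 x \<and> P j2 x)" if "j1 \<in> ?C" "j2 \<in> ?C" "j1 < j2" for j1 j2 x
  proof
    assume a: "P j1 x \<and> P j2 x"
    show False
    proof (cases "snd x")
      case True
      hence "fst x \<in> ty j1" "fst x \<notin> ty (Suc j1)" "fst x \<in> ty j2" using a unfolding P_def by auto
      moreover have "fst x \<in> ty (Suc j1)"
        using conv[of "fst x" j1 j2 "Suc j1"] calculation that by auto
      ultimately show False by blast
    next
      case False
      hence "fst x \<in> ty (Suc j1)" "fst x \<notin> ty j2" "fst x \<in> ty (Suc j2)" using a unfolding P_def by auto
      moreover have "fst x \<in> ty j2"
        using conv[of "fst x" "Suc j1" "Suc j2" j2] calculation that by auto
      ultimately show False by blast
    qed
  qed
  have inj: "inj_on f ?C"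
  proof (rule inj_onI)
    fix j1 j2 assume j: "j1 \<in> ?C" "j2 \<in> ?C" "f j1 = f j2"
    show "j1 = j2"
    proof (rule linorder_cases[of j1 j2])
      assume "j1 < j2" thus ?thesis using key[OF j(1,2), of "f j1"] Pf[OF j(1)] Pf[OF j(2)] j(3) by simp
    next
      assume "j2 < j1" thus ?thesis using key[OF j(2,1), of "f j1"] Pf[OF j(1)] Pf[OF j(2)] j(3) by simp
    qed
  qed
  have img: "f ` ?C \<subseteq> K \<times> (UNIV :: bool set)"
  proof
    fix z assume "z \<in> f ` ?C"
    then obtain j where j: "j \<in> ?C" "z = f j" by blast
    have "fst (f j) \<in> K" using Pf[OF j(1)] unfolding P_def by blast
    thus "z \<in> K \<times> (UNIV :: bool set)" using j(2) by (simp add: mem_Times_iff)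
  qed
  have "card ?C \<le> card (K \<times> (UNIV :: bool set))"
    by (rule card_inj_on_le[OF inj img]) (use finK in simp)
  also have "\<dots> = 2 * card K" by (simp add: card_cartesian_product)
  finally show ?thesis .
qed



definition Lw :: "'a list \<Rightarrow> 'a tword \<Rightarrow> nat \<Rightarrow> nat set" where
  "Lw sl \<rho> j = {x. x < length sl \<and> sl ! x \<in> sig \<rho> j}"

lemma Lw_eq: "(\<lambda>j. {m. m < length (map FProp sl) \<and> (map sat (map FProp sl) ! m) \<rho> j}) = Lw sl \<rho>"
proof (rule ext, rule set_eqI)
  fix j x
  show "x \<in> {m. m < length (map FProp sl) \<and> (map sat (map FProp sl) ! m) \<rho> j} \<longleftrightarrow> x \<in> Lw sl \<rho> j"
    by (cases "x < length sl") (simp_all add: Lw_def)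
qed

lemma sat_FFut: "sat (FFut Is As (map FProp sl)) \<rho> i = fut_sem Is As (Lw sl \<rho>) \<rho> i"
  using Lw_eq[of sl \<rho>] by (simp add: Let_def)

lemma sat_FPast: "sat (FPast Is As (map FProp sl)) \<rho> i = past_sem Is As (Lw sl \<rho>) \<rho> i"
  using Lw_eq[of sl \<rho>] by (simp add: Let_def)

lemma Lw_Al: "Lw sl \<rho> j \<in> Pow {..<length sl}"
  unfolding Lw_def by auto

lemma zip_map_fst_snd: "zip (map fst xs) (map snd xs @ ys) = xs"
  by (induction xs) auto

lemma fut_chain: "fut_sem (map fst xs) (map snd xs @ [B]) L \<rho> i \<longleftrightarrow>
    chain xs B L (\<lambda>j. tau \<rho> j - tau \<rho> i) (length \<rho>) i"
  unfolding fut_sem_fsg by (subst fsg_chain) (simp_all add: zip_map_fst_snd)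

lemma past_chain: "1 \<le> i \<Longrightarrow> i \<le> length \<rho> \<Longrightarrow> past_sem (map fst xs) (map snd xs @ [B]) L \<rho> i \<longleftrightarrow>
    chain xs B (\<lambda>j. L (length \<rho> + 1 - j)) (\<lambda>j. tau \<rho> i - tau \<rho> (length \<rho> + 1 - j)) (length \<rho>)
      (length \<rho> + 1 - i)"
  by (simp only: past_fsg) (subst fsg_chain, simp_all add: zip_map_fst_snd)

definition emptyA :: "(nat, nat set) nfa" where
  "emptyA = \<lparr>init = {}, final = {}, trans = {}\<rparr>"

definition ffalse :: "'a fm" where
  "ffalse = FFut [univI] [emptyA, emptyA] []"

lemma sat_ffalse: "\<not> sat ffalse \<rho> i"
  by (simp add: ffalse_def fut_sem_def lang_def emptyA_def Let_def)

lemma wf_ffalse: "wf_fm Sig ffalse"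
  by (simp add: ffalse_def nfa_wf_def emptyA_def)

fun disj :: "'a fm list \<Rightarrow> 'a fm" where
  "disj [] = ffalse"
| "disj (\<phi> # \<phi>s) = FNeg (FAnd (FNeg \<phi>) (FNeg (disj \<phi>s)))"

lemma sat_disj: "sat (disj \<phi>s) \<rho> i \<longleftrightarrow> (\<exists>\<phi>\<in>set \<phi>s. sat \<phi> \<rho> i)"
  by (induction \<phi>s) (auto simp: sat_ffalse)

lemma wf_disj: "\<forall>\<phi>\<in>set \<phi>s. wf_fm Sig \<phi> \<Longrightarrow> wf_fm Sig (disj \<phi>s)"
  by (induction \<phi>s) (auto simp: wf_ffalse)

lemma wf_bitems:
  assumes "finite Al" "finite (trans M)"
  shows "\<forall>x\<in>set (bitems Al h M R s cf). nfa_wf Al (snd x)"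
proof (induction cf arbitrary: s)
  case Nil
  then show ?case by simp
next
  case (Cons x cf)
  obtain T r s' where x: "x = (T, r, s')" by (cases x) auto
  have "nfa_wf Al (Eaut Al M (R T) s r)" unfolding Eaut_def by (rule wf_tstep[OF assms(1)])
  moreover have "nfa_wf Al (Bd Al M (R T) r s')" unfolding Bd_def
    using natify[OF wf_bodyA[OF assms]] by blast
  moreover have "nfa_wf Al (len1 Al)" by (rule wf_ostep[OF assms(1)])
  ultimately show ?case using Cons.IH[of s'] unfolding x by auto
qed



definition GG :: "intv set \<Rightarrow> 'a tword \<Rightarrow> nat \<Rightarrow> nat \<Rightarrow> 'a isym set \<Rightarrow> bool" where
  "GG K \<rho> i j b \<longleftrightarrow> {a. IProp a \<in> b} = sig \<rho> j \<and> (Anch \<in> b \<longleftrightarrow> j = i) \<and>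
     (j \<noteq> i \<longrightarrow> (\<forall>I\<in>K. IItv I \<in> b \<longrightarrow> in_intv (tau \<rho> j - tau \<rho> i) I))"

lemma la2_upt1: "list_all2 P [1..<Suc n] bs \<longleftrightarrow> length bs = n \<and> (\<forall>j\<in>{1..n}. P j (bs ! (j - 1)))"
proof
  assume a: "list_all2 P [1..<Suc n] bs"
  have l: "length bs = n" using list_all2_lengthD[OF a] by (simp del: upt_Suc)
  have "P j (bs ! (j - 1))" if j: "j \<in> {1..n}" for j
  proof -
    have "j - 1 < n" using j by auto
    hence "P ([1..<Suc n] ! (j - 1)) (bs ! (j - 1))" using a by (simp add: list_all2_conv_all_nth del: upt_Suc)
    moreover have "[1..<Suc n] ! (j - 1) = j" using j by (simp add: nth_upt del: upt_Suc)
    ultimately show ?thesis by simp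
  qed
  thus "length bs = n \<and> (\<forall>j\<in>{1..n}. P j (bs ! (j - 1)))" using l by blast
next
  assume a: "length bs = n \<and> (\<forall>j\<in>{1..n}. P j (bs ! (j - 1)))"
  show "list_all2 P [1..<Suc n] bs"
    unfolding list_all2_conv_all_nth
  proof (intro conjI allI impI)
    show "length [1..<Suc n] = length bs" using a by simp
    fix k assume "k < length [1..<Suc n]"
    hence k: "k < n" by (simp del: upt_Suc)
    have "P (Suc k) (bs ! (Suc k - 1))" using a k by (metis atLeastAtMost_iff Suc_leI le_add1 plus_1_eq_Suc)
    moreover have "[1..<Suc n] ! k = Suc k" using k by (simp add: nth_upt del: upt_Suc)
    ultimately show "P ([1..<Suc n] ! k) (bs ! k)" by simp
  qed
qed

lemma Time_path:
  assumes iw: "lang A \<subseteq> {\<kappa>. interval_word Sig K \<kappa>}" and i: "i \<in> dom_tw \<rho>"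
  shows "(\<rho>, i) \<in> Time K (lang A) \<longleftrightarrow>
    (\<exists>p0\<in>init A. \<exists>qf\<in>final A. \<exists>bs. path A p0 bs qf \<and> list_all2 (GG K \<rho> i) [1..<Suc (length \<rho>)] bs)"
proof
  assume "(\<rho>, i) \<in> Time K (lang A)"
  then obtain \<kappa> where k: "\<kappa> \<in> lang A" "consistent K \<rho> i \<kappa>" unfolding Time_def by blast
  then obtain p0 qf where pq: "p0 \<in> init A" "qf \<in> final A" "path A p0 \<kappa> qf" unfolding lang_def by blast
  have iwk: "interval_word Sig K \<kappa>" using iw k(1) by blast
  hence ex1: "\<exists>!i. is_anchor \<kappa> i" unfolding interval_word_def by blast
  have c: "length \<rho> = length \<kappa>" "i = anch_pos \<kappa>" "\<forall>j\<in>dom_tw \<rho>. sig \<rho> j = {a. IProp a \<in> \<kappa> ! (j - 1)}"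
    "\<forall>j\<in>dom_tw \<rho>. j \<noteq> i \<longrightarrow> (\<forall>I\<in>K. IItv I \<in> \<kappa> ! (j - 1) \<longrightarrow> in_intv (tau \<rho> j - tau \<rho> i) I)"
    using k(2) unfolding consistent_def by auto
  have anc: "is_anchor \<kappa> i" unfolding c(2) anch_pos_def using ex1 by (rule theI')
  have "GG K \<rho> i j (\<kappa> ! (j - 1))" if j: "j \<in> {1..length \<rho>}" for j
  proof -
    have jd: "j \<in> dom_tw \<rho>" using j unfolding dom_tw_def by simp
    have "Anch \<in> \<kappa> ! (j - 1) \<longleftrightarrow> j = i"
    proof
      assume "Anch \<in> \<kappa> ! (j - 1)"
      hence "is_anchor \<kappa> j" using j c(1) unfolding is_anchor_def by simp
      thus "j = i" using anc ex1 by blast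
    next
      assume "j = i" thus "Anch \<in> \<kappa> ! (j - 1)" using anc unfolding is_anchor_def by simp
    qed
    thus ?thesis unfolding GG_def using c(3,4) jd by auto
  qed
  hence "list_all2 (GG K \<rho> i) [1..<Suc (length \<rho>)] \<kappa>" unfolding la2_upt1 using c(1) by simp
  thus "\<exists>p0\<in>init A. \<exists>qf\<in>final A. \<exists>bs. path A p0 bs qf \<and> list_all2 (GG K \<rho> i) [1..<Suc (length \<rho>)] bs"
    using pq by blast
next
  assume "\<exists>p0\<in>init A. \<exists>qf\<in>final A. \<exists>bs. path A p0 bs qf \<and> list_all2 (GG K \<rho> i) [1..<Suc (length \<rho>)] bs"
  then obtain p0 qf bs where pq: "p0 \<in> init A" "qf \<in> final A" "path A p0 bs qf"
    and la: "list_all2 (GG K \<rho> i) [1..<Suc (length \<rho>)] bs" by blast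
  have inl: "bs \<in> lang A" unfolding lang_def using pq by blast
  have iwk: "interval_word Sig K bs" using iw inl by blast
  hence ex1: "\<exists>!i. is_anchor bs i" unfolding interval_word_def by blast
  have l: "length bs = length \<rho>" and g: "\<forall>j\<in>{1..length \<rho>}. GG K \<rho> i j (bs ! (j - 1))"
    using la unfolding la2_upt1 by auto
  have id: "i \<in> {1..length \<rho>}" using i unfolding dom_tw_def .
  have anc: "is_anchor bs i" using g id l unfolding is_anchor_def GG_def by auto
  have ap: "anch_pos bs = i" unfolding anch_pos_def by (rule the1_equality[OF ex1 anc])
  have "consistent K \<rho> i bs"
    unfolding consistent_def
  proof (intro conjI ballI impI)
    show "length \<rho> = length bs" using l by simp
    show "i = anch_pos bs" using ap by simp
    fix j assume "j \<in> dom_tw \<rho>"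
    hence j: "j \<in> {1..length \<rho>}" unfolding dom_tw_def .
    show "sig \<rho> j = {a. IProp a \<in> bs ! (j - 1)}" using g j unfolding GG_def by auto
    fix I assume "j \<noteq> i" "I \<in> K" "IItv I \<in> bs ! (j - 1)"
    thus "in_intv (tau \<rho> j - tau \<rho> i) I" using g j unfolding GG_def by auto
  qed
  thus "(\<rho>, i) \<in> Time K (lang A)" unfolding Time_def using inl by blast
qed

lemma split_word:
  assumes "1 \<le> i" "i \<le> n"
  shows "(list_all2 G [1..<Suc n] bs \<and> path A p0 bs qf) \<longleftrightarrow>
    (\<exists>bs1 b bs2 q0 q. list_all2 G [1..<i] bs1 \<and> path A p0 bs1 q0 \<and> G i b \<and> (q0, b, q) \<in> trans A \<and>
       list_all2 G [Suc i..<Suc n] bs2 \<and> path A q bs2 qf \<and> bs = bs1 @ b # bs2)"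
proof -
  have e: "[1..<Suc n] = [1..<i] @ i # [Suc i..<Suc n]"
  proof -
    have "[1..<Suc n] = [1..<i] @ [i..<Suc n]" using assms by (intro upt_split3) auto
    moreover have "[i..<Suc n] = i # [Suc i..<Suc n]" using assms by (simp add: upt_conv_Cons del: upt_Suc)
    ultimately show ?thesis by simp
  qed
  show ?thesis
  proof
    assume "list_all2 G [1..<Suc n] bs \<and> path A p0 bs qf"
    then obtain us vs where uv: "bs = us @ vs" "list_all2 G [1..<i] us" "list_all2 G (i # [Suc i..<Suc n]) vs"
      "path A p0 bs qf" unfolding e list_all2_append1 by blast
    then obtain b bs2 where vs: "vs = b # bs2" "G i b" "list_all2 G [Suc i..<Suc n] bs2"
      by (auto simp: list_all2_Cons1)
    from uv(4) obtain q0 where "path A p0 us q0" "path A q0 (b # bs2) qf"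
      unfolding uv(1) vs(1) path_append by blast
    then obtain q where "path A p0 us q0" "(q0, b, q) \<in> trans A" "path A q bs2 qf" by auto
    thus "\<exists>bs1 b bs2 q0 q. list_all2 G [1..<i] bs1 \<and> path A p0 bs1 q0 \<and> G i b \<and> (q0, b, q) \<in> trans A \<and>
       list_all2 G [Suc i..<Suc n] bs2 \<and> path A q bs2 qf \<and> bs = bs1 @ b # bs2"
      using uv vs by blast
  next
    assume "\<exists>bs1 b bs2 q0 q. list_all2 G [1..<i] bs1 \<and> path A p0 bs1 q0 \<and> G i b \<and> (q0, b, q) \<in> trans A \<and>
       list_all2 G [Suc i..<Suc n] bs2 \<and> path A q bs2 qf \<and> bs = bs1 @ b # bs2"
    then obtain bs1 b bs2 q0 q where h: "list_all2 G [1..<i] bs1" "path A p0 bs1 q0" "G i b"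
      "(q0, b, q) \<in> trans A" "list_all2 G [Suc i..<Suc n] bs2" "path A q bs2 qf" "bs = bs1 @ b # bs2"
      by blast
    have "list_all2 G [1..<Suc n] bs" unfolding e h(7)
      using h(1,3,5) by (intro list_all2_appendI) auto
    moreover have "path A p0 bs qf" unfolding h(7) path_append using h(2,4,6) by auto
    ultimately show "list_all2 G [1..<Suc n] bs \<and> path A p0 bs qf" by blast
  qed
qed

lemma past_equiv:
  assumes "1 \<le> i" "i \<le> n"
  shows "(\<exists>bs1. list_all2 G [1..<i] bs1 \<and> path A p0 bs1 q0) \<longleftrightarrow>
     GP (\<lambda>j b. G (n + 1 - j) b) (revA A) q0 (n + 1 - i) n p0"
proof -
  have r: "rev [1..<i] = map (\<lambda>j. n + 1 - j) [Suc (n + 1 - i)..<Suc n]"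
  proof -
    have a: "rev [1..<Suc (i - 1)] = map (\<lambda>j. n + 1 - j) [n + 1 - (i - 1)..<Suc (n + 1 - 1)]"
      using assms by (intro rev_upt_refl) auto
    have b: "Suc (i - 1) = i" "n + 1 - (i - 1) = Suc (n + 1 - i)" "Suc (n + 1 - 1) = Suc n"
      using assms by auto
    show ?thesis using a unfolding b .
  qed
  have la: "list_all2 G [1..<i] bs1 \<longleftrightarrow> list_all2 (\<lambda>j b. G (n + 1 - j) b) [Suc (n + 1 - i)..<Suc n] (rev bs1)" for bs1
  proof -
    have "list_all2 G [1..<i] bs1 \<longleftrightarrow> list_all2 G (rev [1..<i]) (rev bs1)" by (simp only: list_all2_rev)
    also have "\<dots> \<longleftrightarrow> list_all2 (\<lambda>j b. G (n + 1 - j) b) [Suc (n + 1 - i)..<Suc n] (rev bs1)"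
      unfolding r list_all2_map1 ..
    finally show ?thesis .
  qed
  show ?thesis
  proof
    assume "\<exists>bs1. list_all2 G [1..<i] bs1 \<and> path A p0 bs1 q0"
    then obtain bs1 where b1: "list_all2 G [1..<i] bs1" "path A p0 bs1 q0" by blast
    have "list_all2 (\<lambda>j b. G (n + 1 - j) b) [Suc (n + 1 - i)..<Suc n] (rev bs1)" using b1(1) la by blast
    moreover have "path (revA A) q0 (rev bs1) p0" using b1(2) path_revA[of A q0 bs1 p0] by blast
    ultimately show "GP (\<lambda>j b. G (n + 1 - j) b) (revA A) q0 (n + 1 - i) n p0"
      unfolding GP_def by blast
  next
    assume "GP (\<lambda>j b. G (n + 1 - j) b) (revA A) q0 (n + 1 - i) n p0"
    then obtain bs where b1: "list_all2 (\<lambda>j b. G (n + 1 - j) b) [Suc (n + 1 - i)..<Suc n] bs"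
      "path (revA A) q0 bs p0" unfolding GP_def by blast
    have "list_all2 G [1..<i] (rev bs)" using la[of "rev bs"] b1(1) by simp
    moreover have "path A p0 (rev bs) q0" using path_revA[of A q0 "rev bs" p0] b1(2) by simp
    ultimately have "list_all2 G [1..<i] (rev bs) \<and> path A p0 (rev bs) q0" by blast
    thus "\<exists>bs1. list_all2 G [1..<i] bs1 \<and> path A p0 bs1 q0" by blast
  qed
qed

lemma Time_char:
  assumes iw: "lang A \<subseteq> {\<kappa>. interval_word Sig K \<kappa>}" and i: "i \<in> dom_tw \<rho>"
  shows "(\<rho>, i) \<in> Time K (lang A) \<longleftrightarrow>
    (\<exists>p0 q0 q qf b. p0 \<in> init A \<and> qf \<in> final A \<and>
       GP (\<lambda>j b. GG K \<rho> i (length \<rho> + 1 - j) b) (revA A) q0 (length \<rho> + 1 - i) (length \<rho>) p0 \<and>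
       GG K \<rho> i i b \<and> (q0, b, q) \<in> trans A \<and> GP (GG K \<rho> i) A q i (length \<rho>) qf)"
proof -
  let ?n = "length \<rho>"
  let ?G = "GG K \<rho> i"
  have i1: "1 \<le> i" "i \<le> ?n" using i unfolding dom_tw_def by auto
  have "(\<rho>, i) \<in> Time K (lang A) \<longleftrightarrow>
     (\<exists>p0\<in>init A. \<exists>qf\<in>final A. \<exists>bs. list_all2 ?G [1..<Suc ?n] bs \<and> path A p0 bs qf)"
    unfolding Time_path[OF iw i] by blast
  also have "\<dots> \<longleftrightarrow> (\<exists>p0\<in>init A. \<exists>qf\<in>final A. \<exists>bs bs1 b bs2 q0 q. list_all2 ?G [1..<i] bs1 \<and>
       path A p0 bs1 q0 \<and> ?G i b \<and> (q0, b, q) \<in> trans A \<and>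
       list_all2 ?G [Suc i..<Suc ?n] bs2 \<and> path A q bs2 qf \<and> bs = bs1 @ b # bs2)"
    unfolding split_word[OF i1] ..
  also have "\<dots> \<longleftrightarrow> (\<exists>p0\<in>init A. \<exists>qf\<in>final A. \<exists>b q0 q. (\<exists>bs1. list_all2 ?G [1..<i] bs1 \<and>
       path A p0 bs1 q0) \<and> ?G i b \<and> (q0, b, q) \<in> trans A \<and>
       (\<exists>bs2. list_all2 ?G [Suc i..<Suc ?n] bs2 \<and> path A q bs2 qf))"
    by blast
  also have "\<dots> \<longleftrightarrow> (\<exists>p0 q0 q qf b. p0 \<in> init A \<and> qf \<in> final A \<and>
       GP (\<lambda>j b. ?G (?n + 1 - j) b) (revA A) q0 (?n + 1 - i) ?n p0 \<and>
       ?G i b \<and> (q0, b, q) \<in> trans A \<and> GP ?G A q i ?n qf)"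
    unfolding past_equiv[OF i1] GP_def by blast
  finally show ?thesis .
qed



definition pr :: "'a list \<Rightarrow> nat set \<Rightarrow> 'a set" where "pr sl c = (\<lambda>x. sl ! x) ` c"

definition Rel :: "'a list \<Rightarrow> intv set \<Rightarrow> nat set \<Rightarrow> 'a isym set \<Rightarrow> bool" where
  "Rel sl T c b \<longleftrightarrow> {a. IProp a \<in> b} = pr sl c \<and> Anch \<notin> b \<and> (\<forall>I. IItv I \<in> b \<longrightarrow> I \<in> T)"

definition RelA :: "'a list \<Rightarrow> nat set \<Rightarrow> 'a isym set \<Rightarrow> bool" where
  "RelA sl c b \<longleftrightarrow> {a. IProp a \<in> b} = pr sl c \<and> Anch \<in> b"

lemma pr_Lw: assumes "set sl = Sig" "sig \<rho> j \<subseteq> Sig" shows "pr sl (Lw sl \<rho> j) = sig \<rho> j"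
proof
  show "pr sl (Lw sl \<rho> j) \<subseteq> sig \<rho> j" unfolding pr_def Lw_def by auto
  show "sig \<rho> j \<subseteq> pr sl (Lw sl \<rho> j)"
  proof
    fix x assume x: "x \<in> sig \<rho> j"
    hence "x \<in> set sl" using assms by auto
    then obtain k where k: "k < length sl" "sl ! k = x" by (auto simp: in_set_conv_nth)
    hence "k \<in> Lw sl \<rho> j" using x unfolding Lw_def by auto
    thus "x \<in> pr sl (Lw sl \<rho> j)" unfolding pr_def using k(2)[symmetric] by (rule rev_image_eqI)
  qed
qed

definition itemsF :: "'a list \<Rightarrow> ('q, 'a isym set) nfa \<Rightarrow> 'q \<Rightarrow> 'q \<Rightarrow> (intv set \<times> 'q \<times> 'q) list
    \<Rightarrow> (intv \<times> (nat, nat set) nfa) list" where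
  "itemsF sl A q0 q cf = (univI, ostep (Pow {..<length sl}) (\<lambda>c. \<exists>b. (q0, b, q) \<in> trans A \<and> RelA sl c b)) #
     bitems (Pow {..<length sl}) id A (Rel sl) q cf"

definition itemsP :: "'a list \<Rightarrow> ('q, 'a isym set) nfa \<Rightarrow> 'q \<Rightarrow> (intv set \<times> 'q \<times> 'q) list
    \<Rightarrow> (intv \<times> (nat, nat set) nfa) list" where
  "itemsP sl A q0 cp = (univI, len1 (Pow {..<length sl})) #
     bitems (Pow {..<length sl}) negI (revA A) (Rel sl) q0 cp"

definition phi :: "'a list \<Rightarrow> ('q, 'a isym set) nfa
    \<Rightarrow> 'q \<times> 'q \<times> (intv set \<times> 'q \<times> 'q) list \<times> (intv set \<times> 'q \<times> 'q) list \<Rightarrow> 'a fm" where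
  "phi sl A c = (case c of (q0, q, cf, cp) \<Rightarrow>
     FAnd (FPast (map fst (itemsP sl A q0 cp)) (map snd (itemsP sl A q0 cp) @ [len1 (Pow {..<length sl})])
             (map FProp sl))
          (FFut (map fst (itemsF sl A q0 q cf)) (map snd (itemsF sl A q0 q cf) @ [len1 (Pow {..<length sl})])
             (map FProp sl)))"

lemma finite_trans_revA: "finite (trans M) \<Longrightarrow> finite (trans (revA M))"
  unfolding revA_def by simp

lemma wf_phi:
  assumes "set sl = Sig" "finite (trans A)"
  shows "wf_fm Sig (phi sl A c)"
proof -
  obtain q0 q cf cp where c: "c = (q0, q, cf, cp)" by (cases c) auto
  let ?Al = "Pow {..<length sl}"
  have fAl: "finite ?Al" by simp
  have w1: "\<forall>x\<in>set (itemsF sl A q0 q cf). nfa_wf ?Al (snd x)"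
    unfolding itemsF_def using wf_bitems[OF fAl assms(2)] wf_ostep[OF fAl] by auto
  have w2: "\<forall>x\<in>set (itemsP sl A q0 cp). nfa_wf ?Al (snd x)"
    unfolding itemsP_def using wf_bitems[OF fAl finite_trans_revA[OF assms(2)]] wf_ostep[OF fAl] by auto
  have w3: "nfa_wf ?Al (len1 ?Al)" by (rule wf_ostep[OF fAl])
  have s: "list_all id (map (wf_fm Sig) (map FProp sl))" using assms(1) by (auto simp: list_all_iff)
  show ?thesis unfolding c phi_def using w1 w2 w3 s by (auto simp: itemsF_def itemsP_def)
qed

lemma chain_anchor_head:
  assumes "\<forall>j. L j \<in> Al"
  shows "chain ((univI, ostep Al P) # xs) B L d n i \<longleftrightarrow> P (L i) \<and> chain xs B L d n i"
proof
  assume "chain ((univI, ostep Al P) # xs) B L d n i"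
  then obtain p' where "i \<le> p'" "segp L i p' \<in> lang (ostep Al P)" "chain xs B L d n p'" by auto
  thus "P (L i) \<and> chain xs B L d n i" unfolding segp_ostep by auto
next
  assume a: "P (L i) \<and> chain xs B L d n i"
  hence "i \<le> n" using chain_le by blast
  thus "chain ((univI, ostep Al P) # xs) B L d n i" using a assms by (auto simp: segp_ostep)
qed

lemma sem_phi:
  assumes sl: "set sl = Sig" and i: "i \<in> dom_tw \<rho>"
  shows "sat (phi sl A (q0, q, cf, cp)) \<rho> i \<longleftrightarrow>
    chain (bitems (Pow {..<length sl}) negI (revA A) (Rel sl) q0 cp) (len1 (Pow {..<length sl}))
       (\<lambda>j. Lw sl \<rho> (length \<rho> + 1 - j)) (\<lambda>j. tau \<rho> i - tau \<rho> (length \<rho> + 1 - j)) (length \<rho>)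
       (length \<rho> + 1 - i) \<and>
    (\<exists>b. (q0, b, q) \<in> trans A \<and> RelA sl (Lw sl \<rho> i) b) \<and>
    chain (bitems (Pow {..<length sl}) id A (Rel sl) q cf) (len1 (Pow {..<length sl}))
       (Lw sl \<rho>) (\<lambda>j. tau \<rho> j - tau \<rho> i) (length \<rho>) i"
proof -
  have i1: "1 \<le> i" "i \<le> length \<rho>" using i unfolding dom_tw_def by auto
  have L1: "\<forall>j. Lw sl \<rho> j \<in> Pow {..<length sl}" using Lw_Al by blast
  have L2: "\<forall>j. Lw sl \<rho> (length \<rho> + 1 - j) \<in> Pow {..<length sl}" using Lw_Al by blast
  show ?thesis
    unfolding phi_def prod.case sat.simps(2) sat_FFut sat_FPast fut_chain past_chain[OF i1]
      itemsP_def itemsF_def chain_len1_head[OF L2] chain_anchor_head[OF L1]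
    by simp
qed



lemma tg_statesA: "tg A \<subseteq> statesA A"
  unfolding tg_def statesA_def by auto

lemma tg_revA_statesA: "tg (revA A) \<subseteq> statesA A"
  unfolding tg_def statesA_def revA_def by force

lemma IItv_in_K:
  assumes "b \<in> Pow (IProp ` Sig \<union> IItv ` K \<union> {Anch})" "IItv I \<in> b"
  shows "I \<in> K"
  using assms by auto

lemma main_equiv:
  fixes Sig :: "'a set" and K :: "intv set" and A :: "('q, 'a isym set) nfa"
  assumes finK: "finite K"
    and wfA: "nfa_wf (Pow (IProp ` Sig \<union> IItv ` K \<union> {Anch})) A"
    and iw: "lang A \<subseteq> {\<kappa>. interval_word Sig K \<kappa>}"
    and sl: "set sl = Sig"
    and tw: "timed_word Sig \<rho>" and i: "i \<in> dom_tw \<rho>"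
    and X: "X = {c \<in> statesA A \<times> statesA A \<times> {cf. set cf \<subseteq> Pow K \<times> statesA A \<times> statesA A \<and> length cf \<le> 2 * card K + 1}
                 \<times> {cf. set cf \<subseteq> Pow K \<times> statesA A \<times> statesA A \<and> length cf \<le> 2 * card K + 1}.
           (case c of (q0, q, cf, cp) \<Rightarrow> endst q cf \<in> final A \<and> endst q0 cp \<in> init A)}"
  shows "(\<exists>c\<in>X. sat (phi sl A c) \<rho> i) \<longleftrightarrow> (\<rho>, i) \<in> Time K (lang A)"
proof -
  define n where "n = length \<rho>"
  define Al where "Al = Pow {..<length sl}"
  define L where "L = Lw sl \<rho>"
  define L' where "L' = (\<lambda>j. L (n + 1 - j))"
  define d where "d = (\<lambda>j. tau \<rho> j - tau \<rho> i)"
  define d' where "d' = (\<lambda>j. tau \<rho> i - tau \<rho> (n + 1 - j))"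
  define BA where "BA = Pow (IProp ` Sig \<union> IItv ` K \<union> {Anch})"
  define CF where "CF = {cf. set cf \<subseteq> Pow K \<times> statesA A \<times> statesA A \<and> length cf \<le> 2 * card K + 1}"
  have XCF: "X = {c \<in> statesA A \<times> statesA A \<times> CF \<times> CF.
           (case c of (q0, q, cf, cp) \<Rightarrow> endst q cf \<in> final A \<and> endst q0 cp \<in> init A)}"
    unfolding X CF_def ..
  have fAl: "finite Al" unfolding Al_def by simp
  have ftA: "finite (trans A)" using wfA unfolding nfa_wf_def by blast
  have ftrA: "finite (trans (revA A))" by (rule finite_trans_revA[OF ftA])
  have lab: "b \<in> BA" if "(x, b, y) \<in> trans A" for x b y
    using wfA that unfolding nfa_wf_def BA_def by blast
  have LAl: "\<forall>j. L j \<in> Al" unfolding L_def Al_def using Lw_Al by blast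
  have L'Al: "\<forall>j. L' j \<in> Al" unfolding L'_def using LAl by blast
  have i1: "1 \<le> i" "i \<le> n" using i unfolding dom_tw_def n_def by auto
  have sigS: "sig \<rho> j \<subseteq> Sig" if "j \<in> {1..n}" for j
    using tw that unfolding timed_word_def dom_tw_def n_def by blast
  have prL: "pr sl (L j) = sig \<rho> j" if "j \<in> {1..n}" for j
    unfolding L_def by (rule pr_Lw[OF sl sigS[OF that]])
  have taumono: "tau \<rho> j \<le> tau \<rho> j'" if "1 \<le> j" "j \<le> j'" "j' \<le> n" for j j'
    using tw that unfolding timed_word_def dom_tw_def n_def by auto
  have monof: "\<forall>j j'. i < j \<longrightarrow> j \<le> j' \<longrightarrow> j' \<le> n \<longrightarrow> d j \<le> d j'"
  proof (intro allI impI)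
    fix j j' assume "i < j" "j \<le> j'" "j' \<le> n"
    thus "d j \<le> d j'" unfolding d_def using taumono[of j j'] i1 by simp
  qed
  have monop: "\<forall>j j'. n + 1 - i < j \<longrightarrow> j \<le> j' \<longrightarrow> j' \<le> n \<longrightarrow> d' j \<le> d' j'"
  proof (intro allI impI)
    fix j j' assume "n + 1 - i < j" "j \<le> j'" "j' \<le> n"
    hence "tau \<rho> (n + 1 - j') \<le> tau \<rho> (n + 1 - j)" using taumono[of "n + 1 - j'" "n + 1 - j"] by simp
    thus "d' j \<le> d' j'" unfolding d'_def by simp
  qed
  have sem: "sat (phi sl A (q0, q, cf, cp)) \<rho> i \<longleftrightarrow>
      chain (bitems Al negI (revA A) (Rel sl) q0 cp) (len1 Al) L' d' n (n + 1 - i) \<and>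
      (\<exists>b. (q0, b, q) \<in> trans A \<and> RelA sl (L i) b) \<and>
      chain (bitems Al id A (Rel sl) q cf) (len1 Al) L d n i" for q0 q cf cp
    unfolding sem_phi[OF sl i] Al_def L'_def L_def d_def d'_def n_def ..
  let ?G = "GG K \<rho> i"
  show ?thesis
  proof
    assume "\<exists>c\<in>X. sat (phi sl A c) \<rho> i"
    then obtain q0 q cf cp where c: "(q0, q, cf, cp) \<in> X" and s: "sat (phi sl A (q0, q, cf, cp)) \<rho> i"
      by (metis prod_cases4)
    have cfs: "cf \<in> CF" "cp \<in> CF" "endst q cf \<in> final A" "endst q0 cp \<in> init A"
      using c unfolding XCF by auto
    have fin_cf: "\<forall>x\<in>set cf. finite (fst x)" "\<forall>x\<in>set cp. finite (fst x)"
    proof -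
      have "finite (fst x)" if "x \<in> set cf \<union> set cp" for x
      proof -
        have "x \<in> Pow K \<times> statesA A \<times> statesA A" using that cfs(1,2) unfolding CF_def by blast
        hence "fst x \<subseteq> K" by auto
        thus ?thesis using finK finite_subset by blast
      qed
      thus "\<forall>x\<in>set cf. finite (fst x)" "\<forall>x\<in>set cp. finite (fst x)" by auto
    qed
    from s[unfolded sem] have chP: "chain (bitems Al negI (revA A) (Rel sl) q0 cp) (len1 Al) L' d' n (n + 1 - i)"
      and anc: "\<exists>b. (q0, b, q) \<in> trans A \<and> RelA sl (L i) b"
      and chF: "chain (bitems Al id A (Rel sl) q cf) (len1 Al) L d n i" by auto
    have gf0: "GP (\<lambda>j b. \<exists>T. (\<forall>I\<in>T. in_intv (d j) (id I)) \<and> Rel sl T (L j) b) A q i n (endst q cf)"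
      by (rule bitems_sound[OF fAl ftA LAl monof chF order_refl fin_cf(1)])
    have gf: "GP ?G A q i n (endst q cf)"
    proof (rule GP_mono[OF gf0])
      fix j b assume j: "i < j" "j \<le> n" and "\<exists>T. (\<forall>I\<in>T. in_intv (d j) (id I)) \<and> Rel sl T (L j) b"
      then obtain T where T: "\<forall>I\<in>T. in_intv (d j) I" "Rel sl T (L j) b" by auto
      have jn: "j \<in> {1..n}" using j i1 by auto
      show "?G j b" unfolding GG_def using T j prL[OF jn] unfolding Rel_def d_def by auto
    qed
    have gp0: "GP (\<lambda>j b. \<exists>T. (\<forall>I\<in>T. in_intv (d' j) (negI I)) \<and> Rel sl T (L' j) b) (revA A) q0
        (n + 1 - i) n (endst q0 cp)"
      by (rule bitems_sound[OF fAl ftrA L'Al monop chP order_refl fin_cf(2)])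
    have gp: "GP (\<lambda>j b. ?G (n + 1 - j) b) (revA A) q0 (n + 1 - i) n (endst q0 cp)"
    proof (rule GP_mono[OF gp0])
      fix j b assume j: "n + 1 - i < j" "j \<le> n" and "\<exists>T. (\<forall>I\<in>T. in_intv (d' j) (negI I)) \<and> Rel sl T (L' j) b"
      then obtain T where T: "\<forall>I\<in>T. in_intv (d' j) (negI I)" "Rel sl T (L' j) b" by auto
      define j0 where "j0 = n + 1 - j"
      have j0: "j0 \<in> {1..n}" "j0 \<noteq> i" "n + 1 - j = j0" using j i1 unfolding j0_def by auto
      have iv: "in_intv (tau \<rho> j0 - tau \<rho> i) I" if "I \<in> T" for I
      proof -
        have "in_intv (- (tau \<rho> j0 - tau \<rho> i)) (negI I)" using T(1) that unfolding d'_def j0(3) by simp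
        thus ?thesis by (simp only: in_intv_negI)
      qed
      show "?G (n + 1 - j) b" unfolding j0(3) GG_def
        using T(2) j0(1,2) prL[OF j0(1)] iv unfolding Rel_def L'_def j0(3) by auto
    qed
    obtain b where b: "(q0, b, q) \<in> trans A" "RelA sl (L i) b" using anc by blast
    have ga: "?G i b" using b(2) prL[of i] i1 unfolding RelA_def GG_def by auto
    show "(\<rho>, i) \<in> Time K (lang A)"
      unfolding Time_char[OF iw i]
      using cfs(3,4) gp ga b(1) gf unfolding n_def by blast
  next
    assume "(\<rho>, i) \<in> Time K (lang A)"
    then obtain p0 q0 q qf b where h: "p0 \<in> init A" "qf \<in> final A"
      "GP (\<lambda>j b. ?G (n + 1 - j) b) (revA A) q0 (n + 1 - i) n p0"
      "?G i b" "(q0, b, q) \<in> trans A" "GP ?G A q i n qf"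
      unfolding Time_char[OF iw i] n_def by blast
    define tyf where "tyf j = {I\<in>K. in_intv (d j) (id I)}" for j
    define typP where "typP j = {I\<in>K. in_intv (d' j) (negI I)}" for j
    have gf: "GP (\<lambda>j b. Rel sl (tyf j) (L j) b) A q i n qf"
    proof (rule GP_mono[OF GP_letters[OF h(6)]])
      fix j b assume j: "i < j" "j \<le> n" and gb: "?G j b \<and> (\<exists>x y. (x, b, y) \<in> trans A)"
      have jn: "j \<in> {1..n}" using j i1 by auto
      have bB: "b \<in> BA" using gb lab by blast
      show "Rel sl (tyf j) (L j) b"
        unfolding Rel_def tyf_def
      proof (intro conjI allI impI)
        show "{a. IProp a \<in> b} = pr sl (L j)" using gb prL[OF jn] unfolding GG_def by auto
        show "Anch \<notin> b" using gb j unfolding GG_def by auto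
        fix I assume "IItv I \<in> b"
        moreover have "I \<in> K" using bB calculation unfolding BA_def by auto
        ultimately show "I \<in> {I \<in> K. in_intv (d j) (id I)}" using gb j unfolding GG_def d_def by auto
      qed
    qed
    obtain cf where cf: "length cf \<le> (if i < n then card {j. i < j \<and> j < n \<and> tyf j \<noteq> tyf (Suc j)} + 1 else 0)"
      "\<forall>x\<in>set cf. fst x \<subseteq> K \<and> fst (snd x) \<in> tg A \<and> snd (snd x) \<in> tg A"
      "endst q cf = qf" "chain (bitems Al id A (Rel sl) q cf) (len1 Al) L d n i"
      using bitems_complete[OF fAl ftA LAl finK tyf_def gf i1(2)] by blast
    have cbf: "card {j. i < j \<and> j < n \<and> tyf j \<noteq> tyf (Suc j)} \<le> 2 * card K"
      by (rule chg_bound[OF finK tyf_def monof])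
    have cfCF: "cf \<in> CF"
    proof -
      have "set cf \<subseteq> Pow K \<times> statesA A \<times> statesA A"
      proof
        fix x assume x: "x \<in> set cf"
        obtain T r s' where xe: "x = (T, r, s')" by (cases x) auto
        have "fst x \<subseteq> K \<and> fst (snd x) \<in> tg A \<and> snd (snd x) \<in> tg A" using cf(2) x by blast
        hence "T \<subseteq> K" "r \<in> statesA A" "s' \<in> statesA A" using tg_statesA[of A] unfolding xe by auto
        thus "x \<in> Pow K \<times> statesA A \<times> statesA A" unfolding xe by simp
      qed
      moreover have "length cf \<le> 2 * card K + 1" using cf(1) cbf by (auto split: if_splits)
      ultimately show ?thesis unfolding CF_def by blast
    qed
    have gp: "GP (\<lambda>j b. Rel sl (typP j) (L' j) b) (revA A) q0 (n + 1 - i) n p0"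
    proof (rule GP_mono[OF GP_letters[OF h(3)]])
      fix j b assume j: "n + 1 - i < j" "j \<le> n" and gb: "?G (n + 1 - j) b \<and> (\<exists>x y. (x, b, y) \<in> trans (revA A))"
      define j0 where "j0 = n + 1 - j"
      have j0: "j0 \<in> {1..n}" "j0 \<noteq> i" "n + 1 - j = j0" using j i1 unfolding j0_def by auto
      have bB: "b \<in> BA" using gb lab trans_revA by metis
      have g0: "?G j0 b" using gb j0(3) by simp
      show "Rel sl (typP j) (L' j) b"
        unfolding Rel_def typP_def
      proof (intro conjI allI impI)
        show "{a. IProp a \<in> b} = pr sl (L' j)" using g0 prL[OF j0(1)] unfolding GG_def L'_def j0(3) by auto
        show "Anch \<notin> b" using g0 j0 unfolding GG_def by auto
        fix I assume Ib: "IItv I \<in> b"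
        have IK: "I \<in> K" using bB Ib unfolding BA_def by auto
        have "in_intv (tau \<rho> j0 - tau \<rho> i) I" using g0 j0 IK Ib unfolding GG_def by auto
        hence "in_intv (- (tau \<rho> j0 - tau \<rho> i)) (negI I)" by (simp only: in_intv_negI)
        hence "in_intv (d' j) (negI I)" unfolding d'_def j0(3) by simp
        thus "I \<in> {I \<in> K. in_intv (d' j) (negI I)}" using IK by simp
      qed
    qed
    have pin: "n + 1 - i \<le> n" using i1 by simp
    obtain cp where cp: "length cp \<le> (if n + 1 - i < n then card {j. n + 1 - i < j \<and> j < n \<and> typP j \<noteq> typP (Suc j)} + 1 else 0)"
      "\<forall>x\<in>set cp. fst x \<subseteq> K \<and> fst (snd x) \<in> tg (revA A) \<and> snd (snd x) \<in> tg (revA A)"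
      "endst q0 cp = p0" "chain (bitems Al negI (revA A) (Rel sl) q0 cp) (len1 Al) L' d' n (n + 1 - i)"
      using bitems_complete[OF fAl ftrA L'Al finK typP_def gp pin] by blast
    have cbp: "card {j. n + 1 - i < j \<and> j < n \<and> typP j \<noteq> typP (Suc j)} \<le> 2 * card K"
      by (rule chg_bound[OF finK typP_def monop])
    have cpCF: "cp \<in> CF"
    proof -
      have "set cp \<subseteq> Pow K \<times> statesA A \<times> statesA A"
      proof
        fix x assume x: "x \<in> set cp"
        obtain T r s' where xe: "x = (T, r, s')" by (cases x) auto
        have "fst x \<subseteq> K \<and> fst (snd x) \<in> tg (revA A) \<and> snd (snd x) \<in> tg (revA A)" using cp(2) x by blast
        hence "T \<subseteq> K" "r \<in> statesA A" "s' \<in> statesA A" using tg_revA_statesA[of A] unfolding xe by auto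
        thus "x \<in> Pow K \<times> statesA A \<times> statesA A" unfolding xe by simp
      qed
      moreover have "length cp \<le> 2 * card K + 1" using cp(1) cbp by (auto split: if_splits)
      ultimately show ?thesis unfolding CF_def by blast
    qed
    have q0q: "q0 \<in> statesA A" "q \<in> statesA A" using h(5) unfolding statesA_def by force+
    have ra: "RelA sl (L i) b" using h(4) prL[of i] i1 unfolding RelA_def GG_def by auto
    have inX: "(q0, q, cf, cp) \<in> X" unfolding XCF using q0q cfCF cpCF cf(3) cp(3) h(1,2) by auto
    have "sat (phi sl A (q0, q, cf, cp)) \<rho> i" unfolding sem using cp(4) cf(4) h(5) ra by blast
    thus "\<exists>c\<in>X. sat (phi sl A c) \<rho> i" using inX by blast
  qed
qed



theorem lemma4:
  fixes Sig :: "'a set" and K :: "intv set" and A :: "('q, 'a isym set) nfa"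
  assumes "finite Sig"
    and "finite K"
    and "nfa_wf (Pow (IProp ` Sig \<union> IItv ` K \<union> {Anch})) A"
    and "lang A \<subseteq> {\<kappa>. interval_word Sig K \<kappa>}"
  shows "\<exists>\<phi> :: 'a fm. wf_fm Sig \<phi> \<and>
           (\<forall>\<rho> i. timed_word Sig \<rho> \<longrightarrow> i \<in> dom_tw \<rho> \<longrightarrow>
              (sat \<phi> \<rho> i \<longleftrightarrow> (\<rho>, i) \<in> Time K (lang A)))"
proof -
  obtain sl where sl: "set sl = Sig" using finite_list[OF assms(1)] by blast
  define CF where "CF = {cf. set cf \<subseteq> Pow K \<times> statesA A \<times> statesA A \<and> length cf \<le> 2 * card K + 1}"
  define X where "X = {c \<in> statesA A \<times> statesA A \<times> {cf. set cf \<subseteq> Pow K \<times> statesA A \<times> statesA A \<and> length cf \<le> 2 * card K + 1}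
                 \<times> {cf. set cf \<subseteq> Pow K \<times> statesA A \<times> statesA A \<and> length cf \<le> 2 * card K + 1}.
           (case c of (q0, q, cf, cp) \<Rightarrow> endst q cf \<in> final A \<and> endst q0 cp \<in> init A)}"
  have fS: "finite (statesA A)" using assms(3) unfolding nfa_wf_def statesA_def by auto
  have fCF: "finite CF" unfolding CF_def
    by (rule finite_lists_length_le) (use fS assms(2) in auto)
  have "X \<subseteq> statesA A \<times> statesA A \<times> CF \<times> CF" unfolding X_def CF_def by blast
  hence fX: "finite X" using fS fCF finite_subset by blast
  obtain xs where xs: "set xs = X" using finite_list[OF fX] by blast
  have ftA: "finite (trans A)" using assms(3) unfolding nfa_wf_def by blast
  show ?thesis
  proof (intro exI[of _ "disj (map (phi sl A) xs)"] conjI allI impI)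
    show "wf_fm Sig (disj (map (phi sl A) xs))"
      by (rule wf_disj) (use wf_phi[OF sl ftA] in auto)
    fix \<rho> i assume tw: "timed_word Sig \<rho>" and i: "i \<in> dom_tw \<rho>"
    have "sat (disj (map (phi sl A) xs)) \<rho> i \<longleftrightarrow> (\<exists>c\<in>X. sat (phi sl A c) \<rho> i)"
      unfolding sat_disj xs[symmetric] by simp
    also have "\<dots> \<longleftrightarrow> (\<rho>, i) \<in> Time K (lang A)"
      by (rule main_equiv[OF assms(2,3,4) sl tw i X_def])
    finally show "sat (disj (map (phi sl A) xs)) \<rho> i \<longleftrightarrow> (\<rho>, i) \<in> Time K (lang A)" .
  qed
qed


end
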